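(* In the post-attack setting with control policy $\gamma$ and attack policy $\phi$ (described in the context), suppose the state–action chain $\{(X_t,A_t)\}_{t\ge0}$ satisfies the Doeblin condition with parameters $(m_0,\lambda)$. Let $Z_t=(X_t,A_t,Y_t)$, let $\Omega(\gamma,\phi)=\{(z,z'):\mathbb P(Z_{t+1}=z'\mid Z_t=z)>0\}$, and let $f:\Omega(\gamma,\phi)\to\mathbb R$ with $\|f\|=\sup_{w\in\Omega(\gamma,\phi)}|f(w)|<\infty$. Set $S_n=\sum_{t=0}^{n-1}f(Z_t,Z_{t+1})$, $\lambda_1=\lambda R_{\min}\gamma_{\min}^2\phi_{\min}^2$ and $\mu=2(m_0+2)\|f\|/\lambda_1$. Then for every $\epsilon>0$ and every $n>\mu/\epsilon$, $$\mathbb P\big(|S_n-\mathbb E[S_n]|\ge n\epsilon\big)\le 2\exp\Big(-2\frac{(n\epsilon-\mu)^2}{n\mu^2}\Big).$$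
   Context: $\mathcal X=\{1,\dots,n\}$, $\mathcal A=\{1,\dots,m\}$; kernel $R_{(i,j),i'}=\mathbb P(X_{t+1}=i'\mid X_t=i,A_t=j)$; control policy $\gamma_{l,j}=\mathbb P(A_t=j\mid Y_t=l)$; attack policy $\phi_{(i,i'),l'}=\mathbb P(Y_{t+1}=l'\mid X_{t+1}=i',X_t=i)$. Given the past, $X_{t+1}\sim R_{(X_t,A_t),\cdot}$, then $Y_{t+1}\sim\phi_{(X_t,X_{t+1}),\cdot}$ conditionally independent of the rest given $(X_t,X_{t+1})$, then $A_{t+1}\sim\gamma_{Y_{t+1},\cdot}$ conditionally independent of the rest given $Y_{t+1}$. $R_{\min},\gamma_{\min},\phi_{\min}$ are the smallest nonzero entries of $R,\gamma,\phi$. Doeblin condition: a chain $W_t$ on a finite set $\mathcal W$ satisfies it with $(m_0,\lambda)$ if there is a probability measure $\psi$ on $\mathcal W$ with $\mathbb P(W_{m_0}\in B\mid W_0=w)\ge\lambda\psi(B)$ for all $w$, $B\subset\mathcal W$. *)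

theory Defs
  imports Main "HOL-Analysis.Analysis"
begin

(* States X = {1..N}, actions A = {1..M}, observations Y take values in X.
   Kernel R i j i' = R_{(i,j),i'}, control gamma l j = gamma_{l,j},
   attack phi i i' l' = phi_{(i,i'),l'}. *)

definition Xs :: "nat \<Rightarrow> nat set" where "Xs N = {1..N}"
definition As :: "nat \<Rightarrow> nat set" where "As M = {1..M}"

definition Zs :: "nat \<Rightarrow> nat \<Rightarrow> (nat \<times> nat \<times> nat) set" where
  "Zs N M = Xs N \<times> As M \<times> Xs N"

definition kernelZ :: "(nat \<Rightarrow> nat \<Rightarrow> nat \<Rightarrow> real) \<Rightarrow> (nat \<Rightarrow> nat \<Rightarrow> real) \<Rightarrow>
    (nat \<Rightarrow> nat \<Rightarrow> nat \<Rightarrow> real) \<Rightarrow> nat \<times> nat \<times> nat \<Rightarrow> nat \<times> nat \<times> nat \<Rightarrow> real" where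
  "kernelZ R \<gamma> \<phi> z z' = (case z of (i, j, l) \<Rightarrow> case z' of (i', j', l') \<Rightarrow>
      R i j i' * \<phi> i i' l' * \<gamma> l' j')"

definition kernelXA :: "nat \<Rightarrow> (nat \<Rightarrow> nat \<Rightarrow> nat \<Rightarrow> real) \<Rightarrow> (nat \<Rightarrow> nat \<Rightarrow> real) \<Rightarrow>
    (nat \<Rightarrow> nat \<Rightarrow> nat \<Rightarrow> real) \<Rightarrow> nat \<times> nat \<Rightarrow> nat \<times> nat \<Rightarrow> real" where
  "kernelXA N R \<gamma> \<phi> w w' = (case w of (i, j) \<Rightarrow> case w' of (i', j') \<Rightarrow>
      R i j i' * (\<Sum>l\<in>Xs N. \<phi> i i' l * \<gamma> l j'))"

fun kpow :: "'a set \<Rightarrow> ('a \<Rightarrow> 'a \<Rightarrow> real) \<Rightarrow> nat \<Rightarrow> 'a \<Rightarrow> 'a \<Rightarrow> real" where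
  "kpow W K 0 w w' = (if w = w' then 1 else 0)"
| "kpow W K (Suc m) w w' = (\<Sum>v\<in>W. kpow W K m w v * K v w')"

definition doeblin :: "'a set \<Rightarrow> ('a \<Rightarrow> 'a \<Rightarrow> real) \<Rightarrow> nat \<Rightarrow> real \<Rightarrow> bool" where
  "doeblin W K m0 lam \<longleftrightarrow> lam > 0 \<and>
     (\<exists>\<psi>. (\<forall>w\<in>W. \<psi> w \<ge> 0) \<and> sum \<psi> W = 1 \<and>
        (\<forall>w\<in>W. \<forall>B. B \<subseteq> W \<longrightarrow> (\<Sum>w'\<in>B. kpow W K m0 w w') \<ge> lam * sum \<psi> B))"

definition min_nonzero :: "real set \<Rightarrow> real" where
  "min_nonzero S = Min (S - {0})"

definition Rmin :: "nat \<Rightarrow> nat \<Rightarrow> (nat \<Rightarrow> nat \<Rightarrow> nat \<Rightarrow> real) \<Rightarrow> real" where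
  "Rmin N M R = min_nonzero {R i j i' | i j i'. i \<in> Xs N \<and> j \<in> As M \<and> i' \<in> Xs N}"

definition gmin :: "nat \<Rightarrow> nat \<Rightarrow> (nat \<Rightarrow> nat \<Rightarrow> real) \<Rightarrow> real" where
  "gmin N M \<gamma> = min_nonzero {\<gamma> l j | l j. l \<in> Xs N \<and> j \<in> As M}"

definition phimin :: "nat \<Rightarrow> (nat \<Rightarrow> nat \<Rightarrow> nat \<Rightarrow> real) \<Rightarrow> real" where
  "phimin N \<phi> = min_nonzero {\<phi> i i' l | i i' l. i \<in> Xs N \<and> i' \<in> Xs N \<and> l \<in> Xs N}"

definition Omega :: "nat \<Rightarrow> nat \<Rightarrow> (nat \<Rightarrow> nat \<Rightarrow> nat \<Rightarrow> real) \<Rightarrow> (nat \<Rightarrow> nat \<Rightarrow> real) \<Rightarrow>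
    (nat \<Rightarrow> nat \<Rightarrow> nat \<Rightarrow> real) \<Rightarrow> ((nat \<times> nat \<times> nat) \<times> (nat \<times> nat \<times> nat)) set" where
  "Omega N M R \<gamma> \<phi> = {(z, z'). z \<in> Zs N M \<and> z' \<in> Zs N M \<and> kernelZ R \<gamma> \<phi> z z' > 0}"

definition fnorm :: "((nat \<times> nat \<times> nat) \<times> (nat \<times> nat \<times> nat)) set \<Rightarrow>
    ((nat \<times> nat \<times> nat) \<times> (nat \<times> nat \<times> nat) \<Rightarrow> real) \<Rightarrow> real" where
  "fnorm \<Omega> f = Max ((\<lambda>w. \<bar>f w\<bar>) ` \<Omega>)"

definition paths :: "nat \<Rightarrow> nat \<Rightarrow> nat \<Rightarrow> (nat \<Rightarrow> nat \<times> nat \<times> nat) set" where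
  "paths N M n = PiE {..n} (\<lambda>_. Zs N M)"

definition path_prob :: "('a \<Rightarrow> real) \<Rightarrow> ('a \<Rightarrow> 'a \<Rightarrow> real) \<Rightarrow> nat \<Rightarrow> (nat \<Rightarrow> 'a) \<Rightarrow> real" where
  "path_prob p0 K n p = p0 (p 0) * (\<Prod>t<n. K (p t) (p (Suc t)))"

definition Ssum :: "('a \<times> 'a \<Rightarrow> real) \<Rightarrow> nat \<Rightarrow> (nat \<Rightarrow> 'a) \<Rightarrow> real" where
  "Ssum f n p = (\<Sum>t<n. f (p t, p (Suc t)))"

end

theory Submission
  imports Defs "HOL-Probability.Hoeffding"
begin

lemma hoeff_finite:
  fixes q X :: "'a \<Rightarrow> real" and a b l :: real
  assumes fin: "finite A" and q0: "\<forall>x\<in>A. q x \<ge> 0" and q1: "sum q A = 1"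
    and rng: "\<forall>x\<in>A. q x > 0 \<longrightarrow> a \<le> X x \<and> X x \<le> b"
    and mean: "(\<Sum>x\<in>A. q x * X x) = 0" and l: "l \<ge> 0"
  shows "(\<Sum>x\<in>A. q x * exp (l * X x)) \<le> exp (l\<^sup>2 * (b - a)\<^sup>2 / 8)"
proof (cases "a < 0 \<and> 0 < b")
  case False
  have z: "\<forall>x\<in>A. q x * X x = 0"
  proof (cases "a \<ge> 0")
    case True
    have "\<forall>x\<in>A. q x * X x \<ge> 0"
    proof
      fix x assume x: "x \<in> A"
      show "q x * X x \<ge> 0"
      proof (cases "q x > 0")
        case True
        then have "X x \<ge> 0" using rng x \<open>a \<ge> 0\<close> by force
        then show ?thesis using True by simp
      next
        case False
        then have "q x = 0" using q0 x by force
        then show ?thesis by simp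
      qed
    qed
    then have "(\<Sum>x\<in>A. q x * X x) = 0 \<longleftrightarrow> (\<forall>x\<in>A. q x * X x = 0)"
      by (intro sum_nonneg_eq_0_iff[OF fin]) auto
    then show ?thesis using mean by simp
  next
    case f2: False
    with False have "b \<le> 0" by auto
    have "\<forall>x\<in>A. - (q x * X x) \<ge> 0"
    proof
      fix x assume x: "x \<in> A"
      show "- (q x * X x) \<ge> 0"
      proof (cases "q x > 0")
        case True
        then have "X x \<le> 0" using rng x \<open>b \<le> 0\<close> by force
        then show ?thesis using True by (simp add: mult_nonneg_nonpos)
      next
        case False
        then have "q x = 0" using q0 x by force
        then show ?thesis by simp
      qed
    qed
    moreover have "(\<Sum>x\<in>A. - (q x * X x)) = 0" using mean by (simp add: sum_negf)
    moreover have "(\<Sum>x\<in>A. - (q x * X x)) = 0 \<longleftrightarrow> (\<forall>x\<in>A. - (q x * X x) = 0)"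
      using calculation(1) by (intro sum_nonneg_eq_0_iff[OF fin]) auto
    ultimately have "\<forall>x\<in>A. - (q x * X x) = 0" by simp
    then show ?thesis by simp
  qed
  have "(\<Sum>x\<in>A. q x * exp (l * X x)) = (\<Sum>x\<in>A. q x)"
  proof (rule sum.cong)
    fix x assume x: "x \<in> A"
    show "q x * exp (l * X x) = q x"
      using z x by (cases "q x = 0") auto
  qed simp
  also have "\<dots> = 1" by (rule q1)
  also have "1 \<le> exp (l\<^sup>2 * (b - a)\<^sup>2 / 8)" by simp
  finally show ?thesis .
next
  case True
  hence "a < 0" "0 < b" by auto
  hence ab: "a < b" by linarith
  hence bane: "b - a \<noteq> 0" by simp
  have "(\<Sum>x\<in>A. q x * exp (l * X x)) \<le>
        (\<Sum>x\<in>A. q x * ((b - X x) / (b - a) * exp (l * a) + (X x - a) / (b - a) * exp (l * b)))"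
  proof (rule sum_mono)
    fix x assume x: "x \<in> A"
    show "q x * exp (l * X x) \<le> q x * ((b - X x) / (b - a) * exp (l * a) + (X x - a) / (b - a) * exp (l * b))"
    proof (cases "q x > 0")
      case False
      with q0 x have "q x = 0" by force
      then show ?thesis by simp
    next
      case qp: True
      with rng x have xr: "a \<le> X x" "X x \<le> b" by auto
      define y where "y = (b - X x) / (b-a)"
      have y: "y \<in> {0..1}"
        using xr ab by (auto simp: y_def)
      have "exp (l * ((1 - y) *\<^sub>R b + y *\<^sub>R a)) \<le> (1 - y) * exp (l * b) + y * exp (l * a)"
        using y l by (intro convex_onD[OF convex_on_exp]) auto
      moreover have "(1 - y) *\<^sub>R b + y *\<^sub>R a = X x"
      proof -
        have "y * (b - a) = b - X x" using bane by (simp add: y_def)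
        moreover have "(1 - y) *\<^sub>R b + y *\<^sub>R a = b - y * (b - a)" by (simp add: algebra_simps)
        ultimately show ?thesis by simp
      qed
      moreover have "1 - y = (X x - a) / (b - a)"
      proof -
        have "1 - y = ((b - a) - (b - X x)) / (b - a)" using bane by (simp add: y_def field_simps)
        then show ?thesis by simp
      qed
      ultimately have "exp (l * X x) \<le> (b - X x) / (b - a) * exp (l*a) + (X x - a)/(b-a) * exp (l*b)"
        by (simp add: y_def)
      then show ?thesis using qp by (intro mult_left_mono) auto
    qed
  qed
  also have "\<dots> = (b * (\<Sum>x\<in>A. q x) - (\<Sum>x\<in>A. q x * X x)) * (exp (l * a) / (b - a))
                 + ((\<Sum>x\<in>A. q x * X x) - a * (\<Sum>x\<in>A. q x)) * (exp (l * b) / (b - a))"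
  proof -
    have "\<And>x. q x * ((b - X x) / (b - a) * exp (l * a) + (X x - a) / (b - a) * exp (l * b))
        = (b * q x - q x * X x) * (exp (l * a) / (b - a)) + (q x * X x - a * q x) * (exp (l * b) / (b - a))"
      using bane by (simp add: field_simps)
    then have "(\<Sum>x\<in>A. q x * ((b - X x) / (b - a) * exp (l * a) + (X x - a) / (b - a) * exp (l * b)))
        = (\<Sum>x\<in>A. (b * q x - q x * X x) * (exp (l * a) / (b - a)) + (q x * X x - a * q x) * (exp (l * b) / (b - a)))"
      by simp
    also have "\<dots> = (b * (\<Sum>x\<in>A. q x) - (\<Sum>x\<in>A. q x * X x)) * (exp (l * a) / (b - a))
                 + ((\<Sum>x\<in>A. q x * X x) - a * (\<Sum>x\<in>A. q x)) * (exp (l * b) / (b - a))"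
      by (simp only: sum.distrib sum_distrib_right[symmetric] sum_subtractf sum_distrib_left[symmetric])
    finally show ?thesis .
  qed
  also have "\<dots> = (b * exp (l * a) - a * exp (l * b)) / (b - a)"
    unfolding mean q1 by (simp add: diff_divide_distrib)
  finally have le1: "(\<Sum>x\<in>A. q x * exp (l * X x)) \<le> (b * exp (l * a) - a * exp (l * b)) / (b - a)" .
  define p where "p = -a / (b - a)"
  define z where "z = l * (b - a)"
  have "z \<ge> 0" unfolding z_def using ab l by auto
  have "p \<ge> 0" using \<open>a < 0\<close> ab unfolding p_def by (intro divide_nonneg_pos) auto
  have pos: "1 + p * (exp z - 1) > 0"
  proof -
    have "exp z \<ge> 1" using \<open>z \<ge> 0\<close> by simp
    hence "p * (exp z - 1) \<ge> 0" using \<open>p \<ge> 0\<close> by simp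
    thus ?thesis by linarith
  qed
  have zp: "-z * p = l * a" using bane by (simp add: z_def p_def)
  have q2: "(1 + p * (exp z - 1)) * (b - a) = b - a * exp z"
  proof -
    have "(1 + p * (exp z - 1)) * (b - a) = (b - a) + (p * (b - a)) * (exp z - 1)" by (simp add: algebra_simps)
    also have "p * (b - a) = - a" using bane by (simp add: p_def)
    finally show ?thesis by (simp add: algebra_simps)
  qed
  have ez: "exp (l * a) * exp z = exp (l * b)"
  proof -
    have "l * a + z = l * b" by (simp add: z_def algebra_simps)
    then show ?thesis by (metis exp_add)
  qed
  have eq: "(b * exp (l * a) - a * exp (l * b)) / (b - a) = exp (-z * p + ln (1 + p * (exp z - 1)))"
  proof -
    have "exp (-z * p + ln (1 + p * (exp z - 1))) = exp (l * a) * (1 + p * (exp z - 1))"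
      using pos by (simp only: exp_add zp exp_ln)
    also have "\<dots> = exp (l * a) * (b - a * exp z) / (b - a)"
      using q2 bane by (simp add: eq_divide_eq)
    also have "\<dots> = (b * exp (l * a) - a * exp (l * b)) / (b - a)"
      using ez by (simp add: algebra_simps)
    finally show ?thesis by simp
  qed
  have "-z * p + ln (1 + p * (exp z - 1)) \<le> z\<^sup>2 / 8"
    by (rule Hoeffdings_lemma_aux) (use \<open>z \<ge> 0\<close> \<open>p \<ge> 0\<close> in simp_all)
  hence "exp (-z * p + ln (1 + p * (exp z - 1))) \<le> exp (z\<^sup>2 / 8)" by simp
  also have "z\<^sup>2 / 8 = l\<^sup>2 * (b - a)\<^sup>2 / 8" by (simp add: z_def power_mult_distrib)
  finally have "exp (-z * p + ln (1 + p * (exp z - 1))) \<le> exp (l\<^sup>2 * (b - a)\<^sup>2 / 8)" .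
  then show ?thesis using le1 unfolding eq by linarith
qed

lemma sum_paths_Suc:
  fixes F :: "(nat \<Rightarrow> 'a) \<Rightarrow> real"
  shows "(\<Sum>p\<in>PiE {..Suc n} (\<lambda>_. Z). F p) = (\<Sum>q\<in>PiE {..n} (\<lambda>_. Z). \<Sum>z\<in>Z. F (q(Suc n := z)))"
proof -
  have e: "{..Suc n} = insert (Suc n) {..n}" by auto
  have "(\<Sum>p\<in>PiE {..Suc n} (\<lambda>_. Z). F p) =
        (\<Sum>p\<in>(\<lambda>(y, g). g(Suc n := y)) ` (Z \<times> PiE {..n} (\<lambda>_. Z)). F p)"
    unfolding e PiE_insert_eq by simp
  also have "\<dots> = (\<Sum>x\<in>Z \<times> PiE {..n} (\<lambda>_. Z). F ((\<lambda>(y, g). g(Suc n := y)) x))"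
    by (rule sum.reindex_cong[OF inj_combinator]) auto
  also have "\<dots> = (\<Sum>z\<in>Z. \<Sum>q\<in>PiE {..n} (\<lambda>_. Z). F (q(Suc n := z)))"
    by (simp add: sum.cartesian_product split_def)
  also have "\<dots> = (\<Sum>q\<in>PiE {..n} (\<lambda>_. Z). \<Sum>z\<in>Z. F (q(Suc n := z)))"
    by (rule sum.swap)
  finally show ?thesis .
qed

lemma sum_paths_0:
  fixes F :: "(nat \<Rightarrow> 'a) \<Rightarrow> real"
  shows "(\<Sum>p\<in>PiE {..0} (\<lambda>_. Z). F p) = (\<Sum>z\<in>Z. F ((\<lambda>x. undefined)(0 := z)))"
proof -
  have e: "{..0::nat} = insert 0 {}" by auto
  have "(\<Sum>p\<in>PiE {..0} (\<lambda>_. Z). F p) =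
        (\<Sum>p\<in>(\<lambda>(y, g). g(0 := y)) ` (Z \<times> PiE {} (\<lambda>_. Z)). F p)"
    unfolding e PiE_insert_eq by simp
  also have "\<dots> = (\<Sum>x\<in>Z \<times> PiE {} (\<lambda>_. Z). F ((\<lambda>(y, g). g(0 := y)) x))"
    by (rule sum.reindex_cong[OF inj_combinator]) auto
  also have "\<dots> = (\<Sum>x\<in>(\<lambda>z. (z, \<lambda>x. undefined)) ` Z. F ((\<lambda>(y, g). g(0 := y)) x))"
  proof -
    have e': "Z \<times> PiE {} (\<lambda>_. Z) = (\<lambda>z. (z, \<lambda>x. undefined)) ` Z" by auto
    show ?thesis unfolding e' by (rule refl)
  qed
  also have "\<dots> = (\<Sum>z\<in>Z. F ((\<lambda>x. undefined)(0 := z)))"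
    by (subst sum.reindex) (auto simp: inj_on_def)
  finally show ?thesis .
qed

lemma paths_mult:
  fixes Z :: "'a set" and a :: "'a \<Rightarrow> 'a \<Rightarrow> real" and p0 :: "'a \<Rightarrow> real"
  defines "Aop \<equiv> (\<lambda>u z. \<Sum>z'\<in>Z. a z z' * u z')"
  shows "(\<Sum>p\<in>PiE {..n} (\<lambda>_. Z). p0 (p 0) * (\<Prod>t<n. a (p t) (p (Suc t))) * u (p n))
         = (\<Sum>z\<in>Z. p0 z * (Aop ^^ n) u z)"
proof (induction n arbitrary: u)
  case 0
  show ?case by (subst sum_paths_0) simp
next
  case (Suc n)
  have "(\<Sum>p\<in>PiE {..Suc n} (\<lambda>_. Z). p0 (p 0) * (\<Prod>t<Suc n. a (p t) (p (Suc t))) * u (p (Suc n)))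
     = (\<Sum>q\<in>PiE {..n} (\<lambda>_. Z). \<Sum>z\<in>Z. p0 (q 0) * (\<Prod>t<n. a (q t) (q (Suc t))) * (a (q n) z * u z))"
    unfolding sum_paths_Suc
  proof (intro sum.cong refl)
    fix q z
    have "(\<Prod>t<n. a ((q(Suc n := z)) t) ((q(Suc n := z)) (Suc t))) = (\<Prod>t<n. a (q t) (q (Suc t)))"
      by (intro prod.cong) auto
    then show "p0 ((q(Suc n := z)) 0) * (\<Prod>t<Suc n. a ((q(Suc n := z)) t) ((q(Suc n := z)) (Suc t))) *
          u ((q(Suc n := z)) (Suc n)) = p0 (q 0) * (\<Prod>t<n. a (q t) (q (Suc t))) * (a (q n) z * u z)"
      by simp
  qed
  also have "\<dots> = (\<Sum>q\<in>PiE {..n} (\<lambda>_. Z). p0 (q 0) * (\<Prod>t<n. a (q t) (q (Suc t))) * Aop u (q n))"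
    unfolding Aop_def by (simp add: sum_distrib_left)
  also have "\<dots> = (\<Sum>z\<in>Z. p0 z * (Aop ^^ n) (Aop u) z)" by (rule Suc.IH)
  also have "\<dots> = (\<Sum>z\<in>Z. p0 z * (Aop ^^ Suc n) u z)" by (simp only: funpow_Suc_right o_def)
  finally show ?case .
qed

lemma paths_add:
  fixes Z :: "'a set" and K :: "'a \<Rightarrow> 'a \<Rightarrow> real" and p0 :: "'a \<Rightarrow> real" and f :: "'a \<times> 'a \<Rightarrow> real"
  assumes rows: "\<forall>z\<in>Z. (\<Sum>z'\<in>Z. K z z') = 1"
  defines "Top \<equiv> (\<lambda>v z. \<Sum>z'\<in>Z. K z z' * (f (z, z') + v z'))"
  shows "(\<Sum>p\<in>PiE {..n} (\<lambda>_. Z). p0 (p 0) * (\<Prod>t<n. K (p t) (p (Suc t))) * (Ssum f n p + v (p n)))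
         = (\<Sum>z\<in>Z. p0 z * (Top ^^ n) v z)"
proof (induction n arbitrary: v)
  case 0
  show ?case by (subst sum_paths_0) (simp add: Ssum_def)
next
  case (Suc n)
  have "(\<Sum>p\<in>PiE {..Suc n} (\<lambda>_. Z). p0 (p 0) * (\<Prod>t<Suc n. K (p t) (p (Suc t))) * (Ssum f (Suc n) p + v (p (Suc n))))
     = (\<Sum>q\<in>PiE {..n} (\<lambda>_. Z). \<Sum>z\<in>Z. p0 (q 0) * (\<Prod>t<n. K (q t) (q (Suc t))) * (K (q n) z * (Ssum f n q + (f (q n, z) + v z))))"
    unfolding sum_paths_Suc
  proof (intro sum.cong refl)
    fix q z
    have "(\<Prod>t<n. K ((q(Suc n := z)) t) ((q(Suc n := z)) (Suc t))) = (\<Prod>t<n. K (q t) (q (Suc t)))"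
      by (intro prod.cong) auto
    moreover have "Ssum f (Suc n) (q(Suc n := z)) = Ssum f n q + f (q n, z)"
    proof -
      have "(\<Sum>t<n. f ((q(Suc n := z)) t, (q(Suc n := z)) (Suc t))) = (\<Sum>t<n. f (q t, q (Suc t)))"
        by (intro sum.cong) auto
      then show ?thesis by (simp add: Ssum_def)
    qed
    ultimately show "p0 ((q(Suc n := z)) 0) * (\<Prod>t<Suc n. K ((q(Suc n := z)) t) ((q(Suc n := z)) (Suc t))) *
          (Ssum f (Suc n) (q(Suc n := z)) + v ((q(Suc n := z)) (Suc n)))
          = p0 (q 0) * (\<Prod>t<n. K (q t) (q (Suc t))) * (K (q n) z * (Ssum f n q + (f (q n, z) + v z)))"
      by (simp add: algebra_simps)
  qed
  also have "\<dots> = (\<Sum>q\<in>PiE {..n} (\<lambda>_. Z). p0 (q 0) * (\<Prod>t<n. K (q t) (q (Suc t))) * (Ssum f n q + Top v (q n)))"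
  proof (intro sum.cong refl)
    fix q assume q: "q \<in> PiE {..n} (\<lambda>_. Z)"
    hence qn: "q n \<in> Z" by auto
    have "(\<Sum>z\<in>Z. K (q n) z * (Ssum f n q + (f (q n, z) + v z)))
        = Ssum f n q * (\<Sum>z\<in>Z. K (q n) z) + Top v (q n)"
      unfolding Top_def by (simp add: algebra_simps sum.distrib sum_distrib_left)
    also have "\<dots> = Ssum f n q + Top v (q n)" using rows qn by simp
    finally show "(\<Sum>z\<in>Z. p0 (q 0) * (\<Prod>t<n. K (q t) (q (Suc t))) * (K (q n) z * (Ssum f n q + (f (q n, z) + v z))))
        = p0 (q 0) * (\<Prod>t<n. K (q t) (q (Suc t))) * (Ssum f n q + Top v (q n))"
      by (simp add: sum_distrib_left[symmetric])
  qed
  also have "\<dots> = (\<Sum>z\<in>Z. p0 z * (Top ^^ n) (Top v) z)" by (rule Suc.IH)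
  also have "\<dots> = (\<Sum>z\<in>Z. p0 z * (Top ^^ Suc n) v z)" by (simp only: funpow_Suc_right o_def)
  finally show ?case .
qed

definition osc_le :: "'b set \<Rightarrow> ('b \<Rightarrow> real) \<Rightarrow> real \<Rightarrow> bool" where
  "osc_le W u d \<longleftrightarrow> (\<forall>x\<in>W. \<forall>y\<in>W. u x - u y \<le> d)"

definition Pop :: "'b set \<Rightarrow> ('b \<Rightarrow> 'b \<Rightarrow> real) \<Rightarrow> ('b \<Rightarrow> real) \<Rightarrow> 'b \<Rightarrow> real" where
  "Pop W P u w = (\<Sum>w'\<in>W. P w w' * u w')"

lemma avg_bounds:
  fixes q u :: "'b \<Rightarrow> real"
  assumes "\<forall>w\<in>W. q w \<ge> 0" "\<forall>w\<in>W. lo \<le> u w \<and> u w \<le> hi"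
  shows "sum q W * lo \<le> (\<Sum>w\<in>W. q w * u w)" "(\<Sum>w\<in>W. q w * u w) \<le> sum q W * hi"
proof -
  have "sum q W * lo = (\<Sum>w\<in>W. q w * lo)" by (simp add: sum_distrib_right)
  also have "\<dots> \<le> (\<Sum>w\<in>W. q w * u w)"
    using assms by (intro sum_mono mult_left_mono) auto
  finally show "sum q W * lo \<le> (\<Sum>w\<in>W. q w * u w)" .
  have "(\<Sum>w\<in>W. q w * u w) \<le> (\<Sum>w\<in>W. q w * hi)"
    using assms by (intro sum_mono mult_left_mono) auto
  also have "\<dots> = sum q W * hi" by (simp add: sum_distrib_right)
  finally show "(\<Sum>w\<in>W. q w * u w) \<le> sum q W * hi" .
qed

lemma kpow_nonneg:
  assumes "\<forall>w\<in>W. \<forall>w'\<in>W. P w w' \<ge> 0" "w \<in> W" "w' \<in> W"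
  shows "kpow W P m w w' \<ge> 0"
  using assms(3)
proof (induction m arbitrary: w')
  case 0 then show ?case by simp
next
  case (Suc m) then show ?case using assms by (auto intro!: sum_nonneg mult_nonneg_nonneg)
qed

lemma kpow_rows:
  assumes fin: "finite W" and rows: "\<forall>w\<in>W. sum (P w) W = 1" and w: "w \<in> W"
  shows "sum (kpow W P m w) W = 1"
proof (induction m)
  case 0
  have "sum (kpow W P 0 w) W = (\<Sum>w'\<in>W. if w = w' then 1 else 0)" by simp
  also have "\<dots> = 1" using fin w by simp
  finally show ?case .
next
  case (Suc m)
  have "sum (kpow W P (Suc m) w) W = (\<Sum>w'\<in>W. \<Sum>v\<in>W. kpow W P m w v * P v w')" by simp
  also have "\<dots> = (\<Sum>v\<in>W. kpow W P m w v * sum (P v) W)"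
    by (subst sum.swap) (simp add: sum_distrib_left)
  also have "\<dots> = (\<Sum>v\<in>W. kpow W P m w v)" using rows by (intro sum.cong) auto
  finally show ?case using Suc by simp
qed

lemma Pop_pow:
  assumes fin: "finite W" and w: "w \<in> W"
  shows "(Pop W P ^^ m) u w = (\<Sum>w'\<in>W. kpow W P m w w' * u w')"
  using w
proof (induction m arbitrary: u w)
  case 0
  have "(\<Sum>w'\<in>W. kpow W P 0 w w' * u w') = (\<Sum>w'\<in>W. if w = w' then u w' else 0)"
    by (intro sum.cong) auto
  also have "\<dots> = u w" using fin 0 by simp
  finally show ?case by simp
next
  case (Suc m)
  have "(Pop W P ^^ Suc m) u w = (Pop W P ^^ m) (Pop W P u) w" by (simp only: funpow_Suc_right o_def)
  also have "\<dots> = (\<Sum>w'\<in>W. kpow W P m w w' * Pop W P u w')" using Suc by blast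
  also have "\<dots> = (\<Sum>w'\<in>W. \<Sum>w''\<in>W. kpow W P m w w' * P w' w'' * u w'')"
    unfolding Pop_def by (simp add: sum_distrib_left mult.assoc)
  also have "\<dots> = (\<Sum>w''\<in>W. (\<Sum>w'\<in>W. kpow W P m w w' * P w' w'') * u w'')"
    by (subst sum.swap) (simp add: sum_distrib_right)
  finally show ?case by simp
qed

lemma osc_minmax:
  fixes u :: "'b \<Rightarrow> real"
  assumes fin: "finite W" and ne: "W \<noteq> {}" and o: "osc_le W u d"
  shows "\<exists>m. \<forall>w\<in>W. m \<le> u w \<and> u w \<le> m + d"
proof -
  have "Min (u ` W) \<in> u ` W" using fin ne by (intro Min_in) auto
  then obtain w0 where w0: "w0 \<in> W" "u w0 = Min (u ` W)" by auto
  have "\<forall>w\<in>W. u w0 \<le> u w \<and> u w \<le> u w0 + d"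
  proof
    fix w assume w: "w \<in> W"
    have "u w0 \<le> u w" unfolding w0(2) using fin w by (intro Min_le) auto
    moreover have "u w - u w0 \<le> d" using o w w0(1) unfolding osc_le_def by blast
    ultimately show "u w0 \<le> u w \<and> u w \<le> u w0 + d" by simp
  qed
  then show ?thesis by blast
qed

lemma osc_nonexp:
  assumes fin: "finite W" and nn: "\<forall>w\<in>W. \<forall>w'\<in>W. P w w' \<ge> 0" and rows: "\<forall>w\<in>W. sum (P w) W = 1"
    and o: "osc_le W u d"
  shows "osc_le W (Pop W P u) d"
proof (cases "W = {}")
  case True then show ?thesis by (simp add: osc_le_def)
next
  case False
  obtain m where m: "\<forall>w\<in>W. m \<le> u w \<and> u w \<le> m + d" using osc_minmax[OF fin False o] by blast
  show ?thesis unfolding osc_le_def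
  proof (intro ballI)
    fix x y assume x: "x \<in> W" and y: "y \<in> W"
    have "Pop W P u x \<le> sum (P x) W * (m + d)"
      unfolding Pop_def using avg_bounds(2)[of W "P x" m u "m + d"] nn x m by auto
    moreover have "sum (P y) W * m \<le> Pop W P u y"
      unfolding Pop_def using avg_bounds(1)[of W "P y" m u "m + d"] nn y m by auto
    ultimately show "Pop W P u x - Pop W P u y \<le> d" using rows x y by simp
  qed
qed

lemma osc_nonexp_pow:
  assumes fin: "finite W" and nn: "\<forall>w\<in>W. \<forall>w'\<in>W. P w w' \<ge> 0" and rows: "\<forall>w\<in>W. sum (P w) W = 1"
    and o: "osc_le W u d"
  shows "osc_le W ((Pop W P ^^ s) u) d"
  by (induction s) (auto intro: osc_nonexp[OF fin nn rows] o)

lemma doeblin_contr: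
  assumes fin: "finite W" and nn: "\<forall>w\<in>W. \<forall>w'\<in>W. P w w' \<ge> 0" and rows: "\<forall>w\<in>W. sum (P w) W = 1"
    and doeb: "doeblin W P m0 lam" and o: "osc_le W u d"
  shows "osc_le W ((Pop W P ^^ m0) u) ((1 - lam) * d)"
proof (cases "W = {}")
  case True then show ?thesis by (simp add: osc_le_def)
next
  case False
  obtain m where m: "\<forall>w\<in>W. m \<le> u w \<and> u w \<le> m + d" using osc_minmax[OF fin False o] by blast
  from doeb obtain \<psi> where psi0: "\<forall>w\<in>W. \<psi> w \<ge> 0" and psi1: "sum \<psi> W = 1"
    and mino: "\<forall>w\<in>W. \<forall>B. B \<subseteq> W \<longrightarrow> (\<Sum>w'\<in>B. kpow W P m0 w w') \<ge> lam * sum \<psi> B"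
    unfolding doeblin_def by blast
  define q where "q = (\<lambda>w w'. kpow W P m0 w w' - lam * \<psi> w')"
  have q0: "\<forall>w'\<in>W. q w w' \<ge> 0" if "w \<in> W" for w
  proof
    fix w' assume "w' \<in> W"
    then show "q w w' \<ge> 0" using mino that unfolding q_def by (auto dest!: bspec[of _ _ w] spec[of _ "{w'}"])
  qed
  have qs: "sum (q w) W = 1 - lam" if "w \<in> W" for w
    unfolding q_def using kpow_rows[OF fin rows that, of m0] psi1
    by (simp add: sum_subtractf sum_distrib_left[symmetric])
  have rep: "(Pop W P ^^ m0) u w = (\<Sum>w'\<in>W. q w w' * u w') + lam * (\<Sum>w'\<in>W. \<psi> w' * u w')"
    if "w \<in> W" for w
    unfolding Pop_pow[OF fin that] q_def
    by (simp add: algebra_simps sum_subtractf sum_distrib_left)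
  show ?thesis unfolding osc_le_def
  proof (intro ballI)
    fix x y assume x: "x \<in> W" and y: "y \<in> W"
    have "(\<Sum>w'\<in>W. q x w' * u w') \<le> (1 - lam) * (m + d)"
      using avg_bounds(2)[of W "q x" m u "m + d"] q0[OF x] m qs[OF x] by auto
    moreover have "(1 - lam) * m \<le> (\<Sum>w'\<in>W. q y w' * u w')"
      using avg_bounds(1)[of W "q y" m u "m + d"] q0[OF y] m qs[OF y] by auto
    ultimately show "(Pop W P ^^ m0) u x - (Pop W P ^^ m0) u y \<le> (1 - lam) * d"
      unfolding rep[OF x] rep[OF y] by (simp add: algebra_simps)
  qed
qed

lemma doeblin_lam_le1:
  assumes fin: "finite W" and ne: "W \<noteq> {}" and rows: "\<forall>w\<in>W. sum (P w) W = 1"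
    and doeb: "doeblin W P m0 lam"
  shows "lam \<le> 1" "lam > 0"
proof -
  from doeb obtain \<psi> where psi1: "sum \<psi> W = 1"
    and mino: "\<forall>w\<in>W. \<forall>B. B \<subseteq> W \<longrightarrow> (\<Sum>w'\<in>B. kpow W P m0 w w') \<ge> lam * sum \<psi> B"
    unfolding doeblin_def by blast
  obtain w where w: "w \<in> W" using ne by blast
  have "lam * sum \<psi> W \<le> sum (kpow W P m0 w) W" using mino w by blast
  hence "lam * 1 \<le> sum (kpow W P m0 w) W" using psi1 by simp
  then show "lam \<le> 1" using kpow_rows[OF fin rows w] by simp
  show "lam > 0" using doeb unfolding doeblin_def by simp
qed

lemma osc_nonneg:
  assumes "osc_le W u d" "W \<noteq> {}" shows "d \<ge> 0"
  using assms unfolding osc_le_def by force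

lemma doeblin_iter:
  assumes fin: "finite W" and nn: "\<forall>w\<in>W. \<forall>w'\<in>W. P w w' \<ge> 0" and rows: "\<forall>w\<in>W. sum (P w) W = 1"
    and doeb: "doeblin W P m0 lam" and m0: "m0 \<ge> 1" and ne: "W \<noteq> {}"
  shows "osc_le W u d \<Longrightarrow> osc_le W ((Pop W P ^^ s) u) ((1 - lam) ^ (s div m0) * d)"
proof (induction s rule: less_induct)
  case (less s)
  show ?case
  proof (cases "s < m0")
    case True
    then show ?thesis using osc_nonexp_pow[OF fin nn rows less.prems] by simp
  next
    case False
    have e: "(Pop W P ^^ s) u = (Pop W P ^^ m0) ((Pop W P ^^ (s - m0)) u)"
      using False by (metis funpow_add le_add_diff_inverse not_less o_apply)
    have IH: "osc_le W ((Pop W P ^^ (s - m0)) u) ((1 - lam) ^ ((s - m0) div m0) * d)"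
      using less.IH[of "s - m0"] less.prems m0 False by auto
    have d: "s div m0 = Suc ((s - m0) div m0)" using False m0 by (simp add: le_div_geq)
    show ?thesis unfolding e d using doeblin_contr[OF fin nn rows doeb IH] by (simp add: mult.assoc)
  qed
qed

lemma doeblin_zero:
  assumes fin: "finite W" and nn: "\<forall>w\<in>W. \<forall>w'\<in>W. P w w' \<ge> 0" and rows: "\<forall>w\<in>W. sum (P w) W = 1"
    and doeb: "doeblin W P 0 lam" and ne: "W \<noteq> {}"
  shows "osc_le W u 0"
proof -
  define d where "d = Max (u ` W) - Min (u ` W)"
  have o: "osc_le W u d" unfolding osc_le_def d_def using fin
    by (auto intro!: diff_mono Max_ge Min_le)
  have o2: "osc_le W u ((1 - lam) * d)" using doeblin_contr[OF fin nn rows doeb o] by simp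
  have "Max (u ` W) \<in> u ` W" "Min (u ` W) \<in> u ` W" using fin ne by (intro Max_in Min_in; auto)+
  then obtain x y where xy: "x \<in> W" "y \<in> W" "u x = Max (u ` W)" "u y = Min (u ` W)"
    by (metis imageE)
  have "u x - u y \<le> (1 - lam) * d" using o2 xy(1,2) unfolding osc_le_def by blast
  hence "d \<le> (1 - lam) * d" using xy(3,4) unfolding d_def by simp
  hence "lam * d \<le> 0" by (simp add: algebra_simps)
  moreover have "lam > 0" using doeb unfolding doeblin_def by simp
  ultimately have "d \<le> 0" by (simp add: mult_le_0_iff)
  then show ?thesis using o unfolding osc_le_def by force
qed

lemma geom_div_sum:
  fixes r :: real
  assumes m0: "m0 \<ge> 1" and r: "0 \<le> r" "r < 1"
  shows "(\<Sum>s<k. r ^ (s div m0)) \<le> m0 / (1 - r)"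
proof -
  have "k \<le> k * m0" using m0 by simp
  hence sub: "{..<k} \<subseteq> {..<k * m0}" by auto
  have "(\<Sum>s<k. r ^ (s div m0)) \<le> (\<Sum>s<k * m0. r ^ (s div m0))"
    by (rule sum_mono2[OF finite_lessThan sub]) (simp add: r)
  also have "\<dots> = (\<Sum>j<k. sum (\<lambda>s. r ^ (s div m0)) {j * m0..<j * m0 + m0})"
    by (rule sum.nat_group[symmetric])
  also have "\<dots> = (\<Sum>j<k. m0 * r ^ j)"
  proof (intro sum.cong refl)
    fix j
    have "sum (\<lambda>s. r ^ (s div m0)) {j * m0..<j * m0 + m0} = sum (\<lambda>s. r ^ j) {j * m0..<j * m0 + m0}"
    proof (intro sum.cong refl)
      fix s assume "s \<in> {j * m0..<j * m0 + m0}"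
      then have "m0 * j \<le> s" "s < m0 * Suc j" by (auto simp: algebra_simps)
      then have "s div m0 = j" by (rule div_nat_eqI)
      then show "r ^ (s div m0) = r ^ j" by simp
    qed
    then show "sum (\<lambda>s. r ^ (s div m0)) {j * m0..<j * m0 + m0} = m0 * r ^ j" by simp
  qed
  also have "\<dots> = m0 * (\<Sum>j<k. r ^ j)" by (simp add: sum_distrib_left)
  also have "\<dots> \<le> m0 * (1 / (1 - r))"
  proof (intro mult_left_mono)
    have "(\<Sum>j<k. r ^ j) = (1 - r ^ k) / (1 - r)" using r by (simp add: sum_gp_strict)
    also have "\<dots> \<le> 1 / (1 - r)" using r by (intro divide_right_mono) auto
    finally show "(\<Sum>j<k. r ^ j) \<le> 1 / (1 - r)" .
  qed simp
  finally show ?thesis by simp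
qed

lemma osc_sum_pow:
  assumes fin: "finite W" and nn: "\<forall>w\<in>W. \<forall>w'\<in>W. P w w' \<ge> 0" and rows: "\<forall>w\<in>W. sum (P w) W = 1"
    and doeb: "doeblin W P m0 lam" and ne: "W \<noteq> {}" and o: "osc_le W v d"
  shows "osc_le W (\<lambda>w. \<Sum>s<k. (Pop W P ^^ s) v w) (d * m0 / lam)"
proof -
  have lam: "lam > 0" "lam \<le> 1" using doeblin_lam_le1[OF fin ne rows doeb] by auto
  have d0: "d \<ge> 0" using osc_nonneg[OF o ne] .
  show ?thesis
  proof (cases "m0 = 0")
    case True
    have "osc_le W ((Pop W P ^^ s) v) 0" for s using doeblin_zero[OF fin nn rows _ ne] doeb True by blast
    show ?thesis unfolding osc_le_def
    proof (intro ballI)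
      fix x y assume x: "x \<in> W" and y: "y \<in> W"
      have "(\<Sum>s<k. (Pop W P ^^ s) v x) - (\<Sum>s<k. (Pop W P ^^ s) v y)
          = (\<Sum>s<k. (Pop W P ^^ s) v x - (Pop W P ^^ s) v y)" by (simp add: sum_subtractf)
      also have "\<dots> \<le> (\<Sum>s<k. 0)"
        using \<open>\<And>s. osc_le W ((Pop W P ^^ s) v) 0\<close> x y unfolding osc_le_def by (intro sum_mono) blast
      finally show "(\<Sum>s<k. (Pop W P ^^ s) v x) - (\<Sum>s<k. (Pop W P ^^ s) v y) \<le> d * m0 / lam"
        using True by simp
    qed
  next
    case False
    have b: "osc_le W ((Pop W P ^^ s) v) ((1 - lam) ^ (s div m0) * d)" for s
      using doeblin_iter[OF fin nn rows doeb _ ne o] False by simp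
    show ?thesis unfolding osc_le_def
    proof (intro ballI)
      fix x y assume x: "x \<in> W" and y: "y \<in> W"
      have "(\<Sum>s<k. (Pop W P ^^ s) v x) - (\<Sum>s<k. (Pop W P ^^ s) v y)
          = (\<Sum>s<k. (Pop W P ^^ s) v x - (Pop W P ^^ s) v y)" by (simp add: sum_subtractf)
      also have "\<dots> \<le> (\<Sum>s<k. (1 - lam) ^ (s div m0) * d)"
        using b x y unfolding osc_le_def by (intro sum_mono) blast
      also have "\<dots> = d * (\<Sum>s<k. (1 - lam) ^ (s div m0))" by (simp add: sum_distrib_left mult.commute)
      also have "\<dots> \<le> d * (m0 / (1 - (1 - lam)))"
        using geom_div_sum[of m0 "1 - lam" k] False lam d0 by (intro mult_left_mono) auto
      finally show "(\<Sum>s<k. (Pop W P ^^ s) v x) - (\<Sum>s<k. (Pop W P ^^ s) v y) \<le> d * m0 / lam" by simp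
    qed
  qed
qed

lemma core_bound:
  fixes Z :: "'a set" and K :: "'a \<Rightarrow> 'a \<Rightarrow> real" and f :: "'a \<times> 'a \<Rightarrow> real" and c s :: real
  defines "Top \<equiv> (\<lambda>v z. \<Sum>z'\<in>Z. K z z' * (f (z, z') + v z'))"
  defines "Uop \<equiv> (\<lambda>u z. \<Sum>z'\<in>Z. (K z z' * exp (s * f (z, z'))) * u z')"
  assumes fin: "finite Z"
    and K0: "\<forall>z\<in>Z. \<forall>z'\<in>Z. K z z' \<ge> 0" and rows: "\<forall>z\<in>Z. sum (K z) Z = 1"
    and rng: "\<forall>k. \<forall>z\<in>Z. \<forall>z'\<in>Z. \<forall>z''\<in>Z. K z z' > 0 \<longrightarrow> K z z'' > 0 \<longrightarrow>
                f (z, z') + (Top ^^ k) (\<lambda>_. 0) z' - (f (z, z'') + (Top ^^ k) (\<lambda>_. 0) z'') \<le> c"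
    and s0: "s \<ge> 0"
  shows "\<forall>z\<in>Z. (Uop ^^ k) (\<lambda>_. 1) z \<le> exp (s * (Top ^^ k) (\<lambda>_. 0) z + real k * s\<^sup>2 * c\<^sup>2 / 8)"
proof (induction k)
  case 0
  then show ?case by simp
next
  case (Suc k)
  show ?case
  proof
    fix z assume z: "z \<in> Z"
    define h where "h = (Top ^^ k) (\<lambda>_. 0)"
    define h' where "h' = Top h"
    have h'eq: "(Top ^^ Suc k) (\<lambda>_. 0) = h'" unfolding h'_def h_def by simp
    define C where "C = real k * s\<^sup>2 * c\<^sup>2 / 8"
    define X where "X = (\<lambda>z'. f (z, z') + h z' - h' z)"
    have "(Uop ^^ Suc k) (\<lambda>_. 1) z = (\<Sum>z'\<in>Z. (K z z' * exp (s * f (z, z'))) * (Uop ^^ k) (\<lambda>_. 1) z')"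
      unfolding Uop_def by simp
    also have "\<dots> \<le> (\<Sum>z'\<in>Z. (K z z' * exp (s * f (z, z'))) * exp (s * h z' + C))"
    proof (intro sum_mono mult_left_mono)
      fix z' assume z': "z' \<in> Z"
      show "(Uop ^^ k) (\<lambda>_. 1) z' \<le> exp (s * h z' + C)"
        using Suc.IH z' unfolding h_def C_def by blast
      show "0 \<le> K z z' * exp (s * f (z, z'))" using K0 z z' by simp
    qed
    also have "\<dots> = exp (s * h' z + C) * (\<Sum>z'\<in>Z. K z z' * exp (s * X z'))"
      unfolding sum_distrib_left
    proof (intro sum.cong refl)
      fix z' assume "z' \<in> Z"
      have ee: "s * f (z, z') + (s * h z' + C) = (s * h' z + C) + s * X z'"
        unfolding X_def by (simp add: algebra_simps)
      have "exp (s * f (z, z')) * exp (s * h z' + C) = exp (s * h' z + C) * exp (s * X z')"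
        by (metis exp_add ee)
      then show "K z z' * exp (s * f (z, z')) * exp (s * h z' + C) = exp (s * h' z + C) * (K z z' * exp (s * X z'))"
        by (metis mult.assoc mult.left_commute)
    qed
    also have "\<dots> \<le> exp (s * h' z + C) * exp (s\<^sup>2 * c\<^sup>2 / 8)"
    proof (intro mult_left_mono)
      define Sp where "Sp = {z'\<in>Z. K z z' > 0}"
      have "Sp \<noteq> {}"
      proof
        assume "Sp = {}"
        hence "\<forall>z'\<in>Z. K z z' = 0" using K0 z unfolding Sp_def by force
        hence "sum (K z) Z = 0" by simp
        thus False using rows z by simp
      qed
      have finSp: "finite Sp" using fin unfolding Sp_def by simp
      define a where "a = Min (X ` Sp)"
      have "a \<in> X ` Sp" unfolding a_def using finSp \<open>Sp \<noteq> {}\<close> by (intro Min_in) auto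
      then obtain z1 where z1: "z1 \<in> Sp" "a = X z1" by auto
      have range: "\<forall>z'\<in>Z. K z z' > 0 \<longrightarrow> a \<le> X z' \<and> X z' \<le> a + c"
      proof (intro ballI impI conjI)
        fix z' assume z': "z' \<in> Z" "K z z' > 0"
        then show "a \<le> X z'" unfolding a_def using finSp Sp_def by (intro Min_le) auto
        have "f (z, z') + h z' - (f (z, z1) + h z1) \<le> c"
          using rng[rule_format, of z z' z1 k] z z' z1(1) unfolding Sp_def h_def by simp
        then show "X z' \<le> a + c" unfolding z1(2) X_def by simp
      qed
      have mean: "(\<Sum>z'\<in>Z. K z z' * X z') = 0"
      proof -
        have "(\<Sum>z'\<in>Z. K z z' * X z') = (\<Sum>z'\<in>Z. K z z' * (f (z, z') + h z')) - sum (K z) Z * h' z"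
          unfolding X_def by (simp add: algebra_simps sum_subtractf sum_distrib_left sum_distrib_right)
        also have "\<dots> = 0" using rows z unfolding h'_def Top_def by simp
        finally show ?thesis .
      qed
      have "(\<Sum>z'\<in>Z. K z z' * exp (s * X z')) \<le> exp (s\<^sup>2 * (a + c - a)\<^sup>2 / 8)"
        by (rule hoeff_finite[OF fin _ _ range mean s0]) (use K0 z rows in auto)
      then show "(\<Sum>z'\<in>Z. K z z' * exp (s * X z')) \<le> exp (s\<^sup>2 * c\<^sup>2 / 8)" by simp
    qed simp
    also have "\<dots> = exp (s * (Top ^^ Suc k) (\<lambda>_. 0) z + real (Suc k) * s\<^sup>2 * c\<^sup>2 / 8)"
    proof -
      have "s * h' z + C + s\<^sup>2 * c\<^sup>2 / 8 = s * h' z + real (Suc k) * s\<^sup>2 * c\<^sup>2 / 8"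
        unfolding C_def by (simp add: field_simps)
      then show ?thesis unfolding h'eq by (metis exp_add)
    qed
    finally show "(Uop ^^ Suc k) (\<lambda>_. 1) z \<le> exp (s * (Top ^^ Suc k) (\<lambda>_. 0) z + real (Suc k) * s\<^sup>2 * c\<^sup>2 / 8)" .
  qed
qed

lemma tail_bound:
  fixes Z :: "'a set" and K :: "'a \<Rightarrow> 'a \<Rightarrow> real" and p0 :: "'a \<Rightarrow> real"
    and f :: "'a \<times> 'a \<Rightarrow> real" and c \<epsilon> :: real and n :: nat
  defines "Top \<equiv> (\<lambda>v z. \<Sum>z'\<in>Z. K z z' * (f (z, z') + v z'))"
  defines "ES \<equiv> (\<Sum>p\<in>PiE {..n} (\<lambda>_. Z). path_prob p0 K n p * Ssum f n p)"
  assumes fin: "finite Z"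
    and K0: "\<forall>z\<in>Z. \<forall>z'\<in>Z. K z z' \<ge> 0" and rows: "\<forall>z\<in>Z. sum (K z) Z = 1"
    and p00: "\<forall>z\<in>Z. p0 z \<ge> 0" and p01: "sum p0 Z = 1"
    and rng: "\<forall>k. \<forall>z\<in>Z. \<forall>z'\<in>Z. \<forall>z''\<in>Z. K z z' > 0 \<longrightarrow> K z z'' > 0 \<longrightarrow>
                f (z, z') + (Top ^^ k) (\<lambda>_. 0) z' - (f (z, z'') + (Top ^^ k) (\<lambda>_. 0) z'') \<le> c"
    and init: "\<forall>z\<in>Z. \<forall>z'\<in>Z. (Top ^^ n) (\<lambda>_. 0) z - (Top ^^ n) (\<lambda>_. 0) z' \<le> c"
    and c0: "c \<ge> 0" and nl: "real n * \<epsilon> > c"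
  shows "(\<Sum>p\<in>{p\<in>PiE {..n} (\<lambda>_. Z). Ssum f n p - ES \<ge> real n * \<epsilon>}. path_prob p0 K n p)
           \<le> exp (- 2 * (real n * \<epsilon> - c)\<^sup>2 / (real n * c\<^sup>2))"
proof -
  define P where "P = PiE {..n} (\<lambda>_. Z)"
  define h where "h = (Top ^^ n) (\<lambda>_. 0)"
  have finP: "finite P" unfolding P_def using fin by (simp add: finite_PiE)
  have prob0: "path_prob p0 K n p \<ge> 0" if "p \<in> P" for p
  proof -
    have pt: "p t \<in> Z" if "t \<le> n" for t using \<open>p \<in> P\<close> that unfolding P_def by (auto simp: PiE_iff)
    have "p0 (p 0) \<ge> 0" using p00 pt[of 0] by simp
    moreover have "(\<Prod>t<n. K (p t) (p (Suc t))) \<ge> 0"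
    proof (rule prod_nonneg)
      fix t assume "t \<in> {..<n}"
      then show "K (p t) (p (Suc t)) \<ge> 0" using K0 pt[of t] pt[of "Suc t"] by simp
    qed
    ultimately show ?thesis unfolding path_prob_def by simp
  qed
  have ES_eq: "ES = (\<Sum>z\<in>Z. p0 z * h z)"
  proof -
    have "ES = (\<Sum>p\<in>P. p0 (p 0) * (\<Prod>t<n. K (p t) (p (Suc t))) * (Ssum f n p + (\<lambda>_. 0) (p n)))"
      unfolding ES_def P_def path_prob_def by simp
    also have "\<dots> = (\<Sum>z\<in>Z. p0 z * (Top ^^ n) (\<lambda>_. 0) z)"
      unfolding P_def Top_def by (rule paths_add[OF rows])
    finally show ?thesis unfolding h_def by simp
  qed
  have hle: "h z \<le> ES + c" if "z \<in> Z" for z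
  proof -
    have "(\<Sum>z'\<in>Z. p0 z' * (h z - c)) \<le> (\<Sum>z'\<in>Z. p0 z' * h z')"
    proof (intro sum_mono mult_left_mono)
      fix z' assume "z' \<in> Z"
      then show "h z - c \<le> h z'" using init that unfolding h_def by force
      show "0 \<le> p0 z'" using p00 \<open>z' \<in> Z\<close> by blast
    qed
    then show ?thesis using p01 ES_eq by (simp add: sum_distrib_right[symmetric])
  qed
  have main: "(\<Sum>p\<in>{p\<in>P. Ssum f n p - ES \<ge> real n * \<epsilon>}. path_prob p0 K n p)
           \<le> exp (- s * (real n * \<epsilon>) + s * c + real n * s\<^sup>2 * c\<^sup>2 / 8)" if s0: "s \<ge> 0" for s
  proof -
    define Uop where "Uop = (\<lambda>u z. \<Sum>z'\<in>Z. (K z z' * exp (s * f (z, z'))) * u z')"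
    have cb: "\<forall>z\<in>Z. (Uop ^^ n) (\<lambda>_. 1) z \<le> exp (s * h z + real n * s\<^sup>2 * c\<^sup>2 / 8)"
      using core_bound[OF fin K0 rows _ s0, of f c n] rng unfolding Uop_def h_def Top_def by blast
    have "(\<Sum>p\<in>{p\<in>P. Ssum f n p - ES \<ge> real n * \<epsilon>}. path_prob p0 K n p)
        \<le> (\<Sum>p\<in>{p\<in>P. Ssum f n p - ES \<ge> real n * \<epsilon>}. path_prob p0 K n p * exp (s * (Ssum f n p - ES - real n * \<epsilon>)))"
    proof (intro sum_mono)
      fix p assume p: "p \<in> {p\<in>P. Ssum f n p - ES \<ge> real n * \<epsilon>}"
      have "1 \<le> exp (s * (Ssum f n p - ES - real n * \<epsilon>))" using p s0 by simp
      then show "path_prob p0 K n p \<le> path_prob p0 K n p * exp (s * (Ssum f n p - ES - real n * \<epsilon>))"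
        using prob0[of p] p by (simp add: mult_le_cancel_left1)
    qed
    also have "\<dots> \<le> (\<Sum>p\<in>P. path_prob p0 K n p * exp (s * (Ssum f n p - ES - real n * \<epsilon>)))"
      by (rule sum_mono2[OF finP]) (auto intro!: mult_nonneg_nonneg prob0)
    also have "\<dots> = exp (- s * (ES + real n * \<epsilon>)) * (\<Sum>p\<in>P. path_prob p0 K n p * exp (s * Ssum f n p))"
      unfolding sum_distrib_left
    proof (intro sum.cong refl)
      fix p
      have "exp (s * (Ssum f n p - ES - real n * \<epsilon>)) = exp (- s * (ES + real n * \<epsilon>)) * exp (s * Ssum f n p)"
        by (simp add: mult_exp_exp algebra_simps)
      then show "path_prob p0 K n p * exp (s * (Ssum f n p - ES - real n * \<epsilon>)) =
          exp (- s * (ES + real n * \<epsilon>)) * (path_prob p0 K n p * exp (s * Ssum f n p))" by simp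
    qed
    also have "(\<Sum>p\<in>P. path_prob p0 K n p * exp (s * Ssum f n p)) = (\<Sum>z\<in>Z. p0 z * (Uop ^^ n) (\<lambda>_. 1) z)"
    proof -
      have "(\<Sum>p\<in>P. path_prob p0 K n p * exp (s * Ssum f n p))
          = (\<Sum>p\<in>P. p0 (p 0) * (\<Prod>t<n. K (p t) (p (Suc t)) * exp (s * f (p t, p (Suc t)))) * (\<lambda>_. 1) (p n))"
      proof (intro sum.cong refl)
        fix p
        have "exp (s * Ssum f n p) = (\<Prod>t<n. exp (s * f (p t, p (Suc t))))"
          unfolding Ssum_def sum_distrib_left by (simp add: exp_sum)
        then show "path_prob p0 K n p * exp (s * Ssum f n p) =
            p0 (p 0) * (\<Prod>t<n. K (p t) (p (Suc t)) * exp (s * f (p t, p (Suc t)))) * (\<lambda>_. 1) (p n)"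
          unfolding path_prob_def by (simp add: prod.distrib)
      qed
      also have "\<dots> = (\<Sum>z\<in>Z. p0 z * (Uop ^^ n) (\<lambda>_. 1) z)"
        unfolding P_def Uop_def by (rule paths_mult)
      finally show ?thesis .
    qed
    also have "exp (- s * (ES + real n * \<epsilon>)) * (\<Sum>z\<in>Z. p0 z * (Uop ^^ n) (\<lambda>_. 1) z)
        \<le> exp (- s * (ES + real n * \<epsilon>)) * (\<Sum>z\<in>Z. p0 z * exp (s * (ES + c) + real n * s\<^sup>2 * c\<^sup>2 / 8))"
    proof (rule mult_left_mono)
      show "(\<Sum>z\<in>Z. p0 z * (Uop ^^ n) (\<lambda>_. 1) z) \<le> (\<Sum>z\<in>Z. p0 z * exp (s * (ES + c) + real n * s\<^sup>2 * c\<^sup>2 / 8))"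
      proof (rule sum_mono)
        fix z assume z: "z \<in> Z"
        have "(Uop ^^ n) (\<lambda>_. 1) z \<le> exp (s * h z + real n * s\<^sup>2 * c\<^sup>2 / 8)" using cb z by blast
        also have "\<dots> \<le> exp (s * (ES + c) + real n * s\<^sup>2 * c\<^sup>2 / 8)"
          using hle[OF z] s0 by (simp add: mult_left_mono)
        finally show "p0 z * (Uop ^^ n) (\<lambda>_. 1) z \<le> p0 z * exp (s * (ES + c) + real n * s\<^sup>2 * c\<^sup>2 / 8)"
          using p00 z by (intro mult_left_mono) auto
      qed
    qed simp
    also have "\<dots> = exp (- s * (ES + real n * \<epsilon>)) * exp (s * (ES + c) + real n * s\<^sup>2 * c\<^sup>2 / 8)"
      using p01 by (simp add: sum_distrib_right[symmetric])
    also have "\<dots> = exp (- s * (real n * \<epsilon>) + s * c + real n * s\<^sup>2 * c\<^sup>2 / 8)"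
    proof -
      have "- s * (ES + real n * \<epsilon>) + (s * (ES + c) + real n * s\<^sup>2 * c\<^sup>2 / 8)
          = - s * (real n * \<epsilon>) + s * c + real n * s\<^sup>2 * c\<^sup>2 / 8" by (simp add: algebra_simps)
      then show ?thesis by (metis exp_add)
    qed
    finally show ?thesis unfolding P_def by simp
  qed
  show ?thesis
  proof (cases "c = 0")
    case True
    show ?thesis using main[of 0] True unfolding P_def by simp
  next
    case False
    hence cp: "c > 0" using c0 by simp
    hence np: "real n > 0" using nl
      by (metis mult_eq_0_iff mult_le_0_iff not_less of_nat_0_le_iff order_le_less_trans)
    define t where "t = real n * \<epsilon> - c"
    have tp: "t > 0" using nl unfolding t_def by simp
    define s where "s = 4 * t / (real n * c\<^sup>2)"
    have s0: "s \<ge> 0" unfolding s_def using tp np cp by simp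
    have "- s * (real n * \<epsilon>) + s * c + real n * s\<^sup>2 * c\<^sup>2 / 8 = - s * t + real n * s\<^sup>2 * c\<^sup>2 / 8"
      unfolding t_def by (simp add: algebra_simps)
    also have "\<dots> = - 2 * t\<^sup>2 / (real n * c\<^sup>2)"
      unfolding s_def using np cp by (simp add: field_simps power2_eq_square)
    finally have "- s * (real n * \<epsilon>) + s * c + real n * s\<^sup>2 * c\<^sup>2 / 8 = - 2 * (real n * \<epsilon> - c)\<^sup>2 / (real n * c\<^sup>2)"
      unfolding t_def .
    then show ?thesis using main[OF s0] unfolding P_def by simp
  qed
qed

lemma fin_sets: "finite (Xs N)" "finite (As M)" "finite (Zs N M)"
  by (auto simp: Xs_def As_def Zs_def)

lemma lift_sum:
  fixes R \<phi> :: "nat \<Rightarrow> nat \<Rightarrow> nat \<Rightarrow> real" and \<gamma> :: "nat \<Rightarrow> nat \<Rightarrow> real" and H :: "nat \<times> nat \<Rightarrow> real"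
  shows "(\<Sum>z'\<in>Zs N M. kernelZ R \<gamma> \<phi> (i, j, l) z' * H (fst z', fst (snd z')))
       = (\<Sum>w\<in>Xs N \<times> As M. kernelXA N R \<gamma> \<phi> (i, j) w * H w)"
proof -
  have "(\<Sum>z'\<in>Zs N M. kernelZ R \<gamma> \<phi> (i, j, l) z' * H (fst z', fst (snd z')))
      = (\<Sum>i'\<in>Xs N. \<Sum>jl\<in>As M \<times> Xs N. R i j i' * \<phi> i i' (snd jl) * \<gamma> (snd jl) (fst jl) * H (i', fst jl))"
    unfolding Zs_def kernelZ_def by (simp add: sum.cartesian_product split_def)
  also have "\<dots> = (\<Sum>i'\<in>Xs N. \<Sum>j'\<in>As M. \<Sum>l'\<in>Xs N. R i j i' * \<phi> i i' l' * \<gamma> l' j' * H (i', j'))"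
    by (simp add: sum.cartesian_product split_def)
  also have "\<dots> = (\<Sum>i'\<in>Xs N. \<Sum>j'\<in>As M. R i j i' * (\<Sum>l'\<in>Xs N. \<phi> i i' l' * \<gamma> l' j') * H (i', j'))"
    by (simp add: sum_distrib_left sum_distrib_right mult.assoc)
  also have "\<dots> = (\<Sum>w\<in>Xs N \<times> As M. kernelXA N R \<gamma> \<phi> (i, j) w * H w)"
    unfolding kernelXA_def by (simp add: sum.cartesian_product split_def)
  finally show ?thesis .
qed

lemma kernelZ_indep: "kernelZ R \<gamma> \<phi> (i, j, l) z' = kernelZ R \<gamma> \<phi> (i, j, l') z'"
  unfolding kernelZ_def by (simp split: prod.splits)

lemma min_nonzero_bounds:
  assumes "finite S" "\<forall>x\<in>S. 0 \<le> x \<and> x \<le> 1" "\<exists>x\<in>S. x \<noteq> 0"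
  shows "0 < min_nonzero S" "min_nonzero S \<le> 1"
proof -
  have ne: "S - {0} \<noteq> {}" using assms(3) by blast
  have "Min (S - {0}) \<in> S - {0}" using assms(1) ne by (intro Min_in) auto
  then show "0 < min_nonzero S" "min_nonzero S \<le> 1" unfolding min_nonzero_def using assms(2)
    by (auto simp: order_le_less)
qed

lemma nonzero_of_sum1:
  fixes g :: "nat \<Rightarrow> real"
  assumes "sum g A = 1" shows "\<exists>x\<in>A. g x \<noteq> 0"
proof (rule ccontr)
  assume "\<not> ?thesis"
  then have "sum g A = 0" by simp
  with assms show False by simp
qed

lemma le1_of_sum1:
  fixes g :: "nat \<Rightarrow> real"
  assumes "finite A" "\<forall>x\<in>A. g x \<ge> 0" "sum g A = 1" "x \<in> A" shows "g x \<le> 1"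
  using member_le_sum[of x A g] assms by auto

lemma model_basic:
  fixes R \<phi> :: "nat \<Rightarrow> nat \<Rightarrow> nat \<Rightarrow> real" and \<gamma> :: "nat \<Rightarrow> nat \<Rightarrow> real"
  assumes R_nonneg: "\<forall>i\<in>Xs N. \<forall>j\<in>As M. \<forall>i'\<in>Xs N. R i j i' \<ge> 0"
    and R_sum: "\<forall>i\<in>Xs N. \<forall>j\<in>As M. (\<Sum>i'\<in>Xs N. R i j i') = 1"
    and \<gamma>_nonneg: "\<forall>l\<in>Xs N. \<forall>j\<in>As M. \<gamma> l j \<ge> 0"
    and \<gamma>_sum: "\<forall>l\<in>Xs N. (\<Sum>j\<in>As M. \<gamma> l j) = 1"
    and \<phi>_nonneg: "\<forall>i\<in>Xs N. \<forall>i'\<in>Xs N. \<forall>l\<in>Xs N. \<phi> i i' l \<ge> 0"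
    and \<phi>_sum: "\<forall>i\<in>Xs N. \<forall>i'\<in>Xs N. (\<Sum>l\<in>Xs N. \<phi> i i' l) = 1"
  shows "\<forall>z\<in>Zs N M. \<forall>z'\<in>Zs N M. kernelZ R \<gamma> \<phi> z z' \<ge> 0"
    and "\<forall>w\<in>Xs N \<times> As M. \<forall>w'\<in>Xs N \<times> As M. kernelXA N R \<gamma> \<phi> w w' \<ge> 0"
    and "\<forall>w\<in>Xs N \<times> As M. sum (kernelXA N R \<gamma> \<phi> w) (Xs N \<times> As M) = 1"
    and "\<forall>z\<in>Zs N M. sum (kernelZ R \<gamma> \<phi> z) (Zs N M) = 1"
proof -
  show "\<forall>z\<in>Zs N M. \<forall>z'\<in>Zs N M. kernelZ R \<gamma> \<phi> z z' \<ge> 0"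
    using R_nonneg \<gamma>_nonneg \<phi>_nonneg by (auto simp: Zs_def kernelZ_def intro!: mult_nonneg_nonneg)
  show "\<forall>w\<in>Xs N \<times> As M. \<forall>w'\<in>Xs N \<times> As M. kernelXA N R \<gamma> \<phi> w w' \<ge> 0"
    using R_nonneg \<gamma>_nonneg \<phi>_nonneg by (auto simp: kernelXA_def intro!: mult_nonneg_nonneg sum_nonneg)
  have rowsXA: "sum (kernelXA N R \<gamma> \<phi> (i, j)) (Xs N \<times> As M) = 1" if ij: "i \<in> Xs N" "j \<in> As M" for i j
  proof -
    have "sum (kernelXA N R \<gamma> \<phi> (i, j)) (Xs N \<times> As M)
        = (\<Sum>i'\<in>Xs N. \<Sum>j'\<in>As M. R i j i' * (\<Sum>l\<in>Xs N. \<phi> i i' l * \<gamma> l j'))"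
      unfolding kernelXA_def by (simp add: sum.cartesian_product split_def)
    also have "\<dots> = (\<Sum>i'\<in>Xs N. R i j i' * (\<Sum>l\<in>Xs N. \<phi> i i' l * (\<Sum>j'\<in>As M. \<gamma> l j')))"
      by (simp add: sum_distrib_left sum.swap[of _ "As M"])
    also have "\<dots> = (\<Sum>i'\<in>Xs N. R i j i' * (\<Sum>l\<in>Xs N. \<phi> i i' l))"
      using \<gamma>_sum by (intro sum.cong refl arg_cong2[where f="(*)"]) auto
    also have "\<dots> = (\<Sum>i'\<in>Xs N. R i j i')"
      using \<phi>_sum ij by (intro sum.cong refl) auto
    also have "\<dots> = 1" using R_sum ij by auto
    finally show ?thesis .
  qed
  then show "\<forall>w\<in>Xs N \<times> As M. sum (kernelXA N R \<gamma> \<phi> w) (Xs N \<times> As M) = 1" by auto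
  show "\<forall>z\<in>Zs N M. sum (kernelZ R \<gamma> \<phi> z) (Zs N M) = 1"
  proof
    fix z assume z: "z \<in> Zs N M"
    obtain i j l where zz: "z = (i, j, l)" by (cases z) auto
    have ij: "i \<in> Xs N" "j \<in> As M" using z zz by (auto simp: Zs_def)
    have "sum (kernelZ R \<gamma> \<phi> z) (Zs N M) = (\<Sum>z'\<in>Zs N M. kernelZ R \<gamma> \<phi> (i, j, l) z' * (\<lambda>_. 1) (fst z', fst (snd z')))"
      unfolding zz by simp
    also have "\<dots> = (\<Sum>w\<in>Xs N \<times> As M. kernelXA N R \<gamma> \<phi> (i, j) w * (\<lambda>_. 1) w)" by (rule lift_sum)
    also have "\<dots> = 1" using rowsXA[OF ij] by simp
    finally show "sum (kernelZ R \<gamma> \<phi> z) (Zs N M) = 1" .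
  qed
qed

lemma model_osc:
  fixes R \<phi> :: "nat \<Rightarrow> nat \<Rightarrow> nat \<Rightarrow> real" and \<gamma> :: "nat \<Rightarrow> nat \<Rightarrow> real"
    and f :: "(nat \<times> nat \<times> nat) \<times> (nat \<times> nat \<times> nat) \<Rightarrow> real" and F lam :: real and m0 k N M :: nat
  defines "Top \<equiv> (\<lambda>v z. \<Sum>z'\<in>Zs N M. kernelZ R \<gamma> \<phi> z z' * (f (z, z') + v z'))"
  assumes N1: "N \<ge> 1" and M1: "M \<ge> 1"
    and KZ0: "\<forall>z\<in>Zs N M. \<forall>z'\<in>Zs N M. kernelZ R \<gamma> \<phi> z z' \<ge> 0"
    and P0: "\<forall>w\<in>Xs N \<times> As M. \<forall>w'\<in>Xs N \<times> As M. kernelXA N R \<gamma> \<phi> w w' \<ge> 0"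
    and P1: "\<forall>w\<in>Xs N \<times> As M. sum (kernelXA N R \<gamma> \<phi> w) (Xs N \<times> As M) = 1"
    and KZ1: "\<forall>z\<in>Zs N M. sum (kernelZ R \<gamma> \<phi> z) (Zs N M) = 1"
    and doeb: "doeblin (Xs N \<times> As M) (kernelXA N R \<gamma> \<phi>) m0 lam"
    and Fb: "\<forall>z\<in>Zs N M. \<forall>z'\<in>Zs N M. kernelZ R \<gamma> \<phi> z z' > 0 \<longrightarrow> \<bar>f (z, z')\<bar> \<le> F"
    and F0: "F \<ge> 0"
  shows "\<forall>z'\<in>Zs N M. \<forall>z''\<in>Zs N M. (Top ^^ k) (\<lambda>_. 0) z' - (Top ^^ k) (\<lambda>_. 0) z'' \<le> 2 * F + 2 * F * m0 / lam"
proof -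
  let ?Z = "Zs N M" and ?W = "Xs N \<times> As M" and ?K = "kernelZ R \<gamma> \<phi>" and ?P = "kernelXA N R \<gamma> \<phi>"
  have finZ: "finite ?Z" and finW: "finite ?W" by (auto simp: fin_sets)
  have oneX: "1 \<in> Xs N" using N1 by (simp add: Xs_def)
  have oneA: "1 \<in> As M" using M1 by (simp add: As_def)
  have neW: "?W \<noteq> {}" using oneX oneA by blast
  have lam0: "lam > 0" using doeb unfolding doeblin_def by simp
  define g where "g = (\<lambda>z. \<Sum>z'\<in>?Z. ?K z z' * f (z, z'))"
  define v0 where "v0 = (\<lambda>w. Pop ?Z ?K g (fst w, snd w, 1))"
  define H where "H = (\<lambda>k w. \<Sum>s<k. (Pop ?W ?P ^^ s) v0 w)"
  have gb: "-F \<le> g z \<and> g z \<le> F" if z: "z \<in> ?Z" for z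
  proof -
    define u where "u = (\<lambda>z'. if ?K z z' > 0 then f (z, z') else 0)"
    have ge: "g z = (\<Sum>z'\<in>?Z. ?K z z' * u z')"
      unfolding g_def u_def
    proof (intro sum.cong refl)
      fix z' assume z': "z' \<in> ?Z"
      show "?K z z' * f (z, z') = ?K z z' * (if ?K z z' > 0 then f (z, z') else 0)"
        using KZ0 z z' by (cases "?K z z' > 0") (auto simp: order_le_less)
    qed
    have ub: "\<forall>z'\<in>?Z. -F \<le> u z' \<and> u z' \<le> F"
    proof
      fix z' assume z': "z' \<in> ?Z"
      show "-F \<le> u z' \<and> u z' \<le> F"
      proof (cases "?K z z' > 0")
        case True
        then have "\<bar>f (z, z')\<bar> \<le> F" using Fb z z' by blast
        then show ?thesis using True unfolding u_def by (simp add: abs_le_iff)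
      next
        case False
        then show ?thesis using F0 unfolding u_def by simp
      qed
    qed
    have "sum (?K z) ?Z * (-F) \<le> (\<Sum>z'\<in>?Z. ?K z z' * u z')" "(\<Sum>z'\<in>?Z. ?K z z' * u z') \<le> sum (?K z) ?Z * F"
      using avg_bounds[of ?Z "?K z" "-F" u F] KZ0 z ub by auto
    then show ?thesis using KZ1 z ge by simp
  qed
  have v0b: "-F \<le> v0 w \<and> v0 w \<le> F" if w: "w \<in> ?W" for w
  proof -
    have z1: "(fst w, snd w, 1) \<in> ?Z" using w oneX by (auto simp: Zs_def)
    have "sum (?K (fst w, snd w, 1)) ?Z * (-F) \<le> v0 w" "v0 w \<le> sum (?K (fst w, snd w, 1)) ?Z * F"
      unfolding v0_def Pop_def using avg_bounds[of ?Z "?K (fst w, snd w, 1)" "-F" g F] KZ0 z1 gb by auto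
    then show ?thesis using KZ1 z1 by simp
  qed
  have ov0: "osc_le ?W v0 (2 * F)"
    unfolding osc_le_def using v0b by (smt (verit))
  have oH: "osc_le ?W (H k') (2 * F * m0 / lam)" for k'
    using osc_sum_pow[OF finW P0 P1 doeb neW ov0, of k'] unfolding H_def by simp
  have T2: "(Top ^^ Suc k') (\<lambda>_. 0) z = g z + Pop ?Z ?K ((Top ^^ k') (\<lambda>_. 0)) z" for k' z
    unfolding Top_def g_def Pop_def by (simp add: distrib_left sum.distrib)
  have T1: "\<forall>i j l. Pop ?Z ?K ((Top ^^ k') (\<lambda>_. 0)) (i, j, l) = H k' (i, j)" for k'
  proof (induction k')
    case 0
    then show ?case by (simp add: Pop_def H_def)
  next
    case (Suc k')
    show ?case
    proof (intro allI)
      fix i j l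
      have "Pop ?Z ?K ((Top ^^ Suc k') (\<lambda>_. 0)) (i, j, l)
          = (\<Sum>z'\<in>?Z. ?K (i, j, l) z' * (g z' + Pop ?Z ?K ((Top ^^ k') (\<lambda>_. 0)) z'))"
        unfolding Pop_def T2 by simp
      also have "\<dots> = (\<Sum>z'\<in>?Z. ?K (i, j, l) z' * g z') + (\<Sum>z'\<in>?Z. ?K (i, j, l) z' * H k' (fst z', fst (snd z')))"
      proof -
        have "Pop ?Z ?K ((Top ^^ k') (\<lambda>_. 0)) z' = H k' (fst z', fst (snd z'))" for z'
          using Suc.IH by (cases z') auto
        then show ?thesis by (simp add: distrib_left sum.distrib)
      qed
      also have "(\<Sum>z'\<in>?Z. ?K (i, j, l) z' * g z') = v0 (i, j)"
        unfolding v0_def Pop_def by (simp add: kernelZ_indep[of R \<gamma> \<phi> i j l _ 1])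
      also have "(\<Sum>z'\<in>?Z. ?K (i, j, l) z' * H k' (fst z', fst (snd z'))) = (\<Sum>w\<in>?W. ?P (i, j) w * H k' w)"
        by (rule lift_sum)
      also have "\<dots> = (\<Sum>s<k'. Pop ?W ?P ((Pop ?W ?P ^^ s) v0) (i, j))"
        unfolding H_def Pop_def by (simp add: sum_distrib_left sum.swap[of _ "?W"])
      finally have eq1: "Pop ?Z ?K ((Top ^^ Suc k') (\<lambda>_. 0)) (i, j, l)
          = v0 (i, j) + (\<Sum>s<k'. Pop ?W ?P ((Pop ?W ?P ^^ s) v0) (i, j))" .
      have "H (Suc k') (i, j) = v0 (i, j) + (\<Sum>s<k'. Pop ?W ?P ((Pop ?W ?P ^^ s) v0) (i, j))"
        unfolding H_def by (subst sum.lessThan_Suc_shift) simp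
      then show "Pop ?Z ?K ((Top ^^ Suc k') (\<lambda>_. 0)) (i, j, l) = H (Suc k') (i, j)"
        using eq1 by simp
    qed
  qed
  show ?thesis
  proof (intro ballI)
    fix z' z'' assume z': "z' \<in> ?Z" and z'': "z'' \<in> ?Z"
    show "(Top ^^ k) (\<lambda>_. 0) z' - (Top ^^ k) (\<lambda>_. 0) z'' \<le> 2 * F + 2 * F * m0 / lam"
    proof (cases k)
      case 0
      then show ?thesis using F0 lam0 by simp
    next
      case (Suc k')
      obtain i' j' l' where e': "z' = (i', j', l')" by (cases z') auto
      obtain i'' j'' l'' where e'': "z'' = (i'', j'', l'')" by (cases z'') auto
      have w': "(i', j') \<in> ?W" and w'': "(i'', j'') \<in> ?W" using z' z'' e' e'' by (auto simp: Zs_def)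
      have "(Top ^^ k) (\<lambda>_. 0) z' - (Top ^^ k) (\<lambda>_. 0) z'' = (g z' - g z'') + (H k' (i', j') - H k' (i'', j''))"
        unfolding Suc T2 using T1 e' e'' by simp
      also have "\<dots> \<le> 2 * F + 2 * F * m0 / lam"
        using gb[OF z'] gb[OF z''] oH[of k'] w' w'' unfolding osc_le_def by fastforce
      finally show ?thesis .
    qed
  qed
qed

lemma model_tail:
  fixes N M :: nat
    and R \<phi> :: "nat \<Rightarrow> nat \<Rightarrow> nat \<Rightarrow> real"
    and \<gamma> :: "nat \<Rightarrow> nat \<Rightarrow> real"
    and p0 :: "nat \<times> nat \<times> nat \<Rightarrow> real"
    and f :: "(nat \<times> nat \<times> nat) \<times> (nat \<times> nat \<times> nat) \<Rightarrow> real"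
    and m0 :: nat and lam \<epsilon> :: real and n :: nat and F c :: real
  assumes N1: "N \<ge> 1" and M1: "M \<ge> 1"
    and R_nonneg: "\<forall>i\<in>Xs N. \<forall>j\<in>As M. \<forall>i'\<in>Xs N. R i j i' \<ge> 0"
    and R_sum: "\<forall>i\<in>Xs N. \<forall>j\<in>As M. (\<Sum>i'\<in>Xs N. R i j i') = 1"
    and \<gamma>_nonneg: "\<forall>l\<in>Xs N. \<forall>j\<in>As M. \<gamma> l j \<ge> 0"
    and \<gamma>_sum: "\<forall>l\<in>Xs N. (\<Sum>j\<in>As M. \<gamma> l j) = 1"
    and \<phi>_nonneg: "\<forall>i\<in>Xs N. \<forall>i'\<in>Xs N. \<forall>l\<in>Xs N. \<phi> i i' l \<ge> 0"
    and \<phi>_sum: "\<forall>i\<in>Xs N. \<forall>i'\<in>Xs N. (\<Sum>l\<in>Xs N. \<phi> i i' l) = 1"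
    and p0_nonneg: "\<forall>z\<in>Zs N M. p0 z \<ge> 0"
    and p0_sum: "(\<Sum>z\<in>Zs N M. p0 z) = 1"
    and doeb: "doeblin (Xs N \<times> As M) (kernelXA N R \<gamma> \<phi>) m0 lam"
    and Fb: "\<forall>z\<in>Zs N M. \<forall>z'\<in>Zs N M. kernelZ R \<gamma> \<phi> z z' > 0 \<longrightarrow> \<bar>f (z, z')\<bar> \<le> F"
    and F0: "F \<ge> 0"
    and cbig: "c \<ge> 4 * F + 2 * F * m0 / lam"
    and nl: "real n * \<epsilon> > c"
  shows "(\<Sum>p\<in>{p\<in>paths N M n. Ssum f n p - (\<Sum>p\<in>paths N M n. path_prob p0 (kernelZ R \<gamma> \<phi>) n p * Ssum f n p) \<ge> real n * \<epsilon>}.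
            path_prob p0 (kernelZ R \<gamma> \<phi>) n p)
         \<le> exp (- 2 * (real n * \<epsilon> - c)\<^sup>2 / (real n * c\<^sup>2))"
proof -
  note basic = model_basic[OF R_nonneg R_sum \<gamma>_nonneg \<gamma>_sum \<phi>_nonneg \<phi>_sum]
  have lam0: "lam > 0" using doeb unfolding doeblin_def by simp
  have osc: "\<forall>z'\<in>Zs N M. \<forall>z''\<in>Zs N M.
      ((\<lambda>v z. \<Sum>z'\<in>Zs N M. kernelZ R \<gamma> \<phi> z z' * (f (z, z') + v z')) ^^ k) (\<lambda>_. 0) z'
    - ((\<lambda>v z. \<Sum>z'\<in>Zs N M. kernelZ R \<gamma> \<phi> z z' * (f (z, z') + v z')) ^^ k) (\<lambda>_. 0) z''
      \<le> 2 * F + 2 * F * m0 / lam" for k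
    by (rule model_osc[OF N1 M1 basic(1,2,3,4) doeb Fb F0])
  have "2 * F * m0 / lam \<ge> 0" using F0 lam0 by simp
  then have c0: "c \<ge> 0" using cbig F0 by linarith
  have "(\<Sum>p\<in>{p\<in>PiE {..n} (\<lambda>_. Zs N M). Ssum f n p - (\<Sum>p\<in>PiE {..n} (\<lambda>_. Zs N M). path_prob p0 (kernelZ R \<gamma> \<phi>) n p * Ssum f n p) \<ge> real n * \<epsilon>}.
            path_prob p0 (kernelZ R \<gamma> \<phi>) n p)
         \<le> exp (- 2 * (real n * \<epsilon> - c)\<^sup>2 / (real n * c\<^sup>2))"
  proof (rule tail_bound[OF fin_sets(3) basic(1) basic(4) p0_nonneg p0_sum _ _ c0 nl])
    show "\<forall>k. \<forall>z\<in>Zs N M. \<forall>z'\<in>Zs N M. \<forall>z''\<in>Zs N M. kernelZ R \<gamma> \<phi> z z' > 0 \<longrightarrow> kernelZ R \<gamma> \<phi> z z'' > 0 \<longrightarrow>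
       f (z, z') + ((\<lambda>v z. \<Sum>z'\<in>Zs N M. kernelZ R \<gamma> \<phi> z z' * (f (z, z') + v z')) ^^ k) (\<lambda>_. 0) z'
       - (f (z, z'') + ((\<lambda>v z. \<Sum>z'\<in>Zs N M. kernelZ R \<gamma> \<phi> z z' * (f (z, z') + v z')) ^^ k) (\<lambda>_. 0) z'') \<le> c"
    proof (intro allI ballI impI)
      fix k z z' z'' assume z: "z \<in> Zs N M" and z': "z' \<in> Zs N M" and z'': "z'' \<in> Zs N M"
        and k1: "kernelZ R \<gamma> \<phi> z z' > 0" and k2: "kernelZ R \<gamma> \<phi> z z'' > 0"
      have "\<bar>f (z, z')\<bar> \<le> F" "\<bar>f (z, z'')\<bar> \<le> F" using Fb z z' z'' k1 k2 by blast+
      moreover note osc[of k, rule_format, OF z' z'']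
      ultimately show "f (z, z') + ((\<lambda>v z. \<Sum>z'\<in>Zs N M. kernelZ R \<gamma> \<phi> z z' * (f (z, z') + v z')) ^^ k) (\<lambda>_. 0) z'
       - (f (z, z'') + ((\<lambda>v z. \<Sum>z'\<in>Zs N M. kernelZ R \<gamma> \<phi> z z' * (f (z, z') + v z')) ^^ k) (\<lambda>_. 0) z'') \<le> c"
        using cbig by (simp add: abs_le_iff)
    qed
    show "\<forall>z\<in>Zs N M. \<forall>z'\<in>Zs N M.
       ((\<lambda>v z. \<Sum>z'\<in>Zs N M. kernelZ R \<gamma> \<phi> z z' * (f (z, z') + v z')) ^^ n) (\<lambda>_. 0) z
     - ((\<lambda>v z. \<Sum>z'\<in>Zs N M. kernelZ R \<gamma> \<phi> z z' * (f (z, z') + v z')) ^^ n) (\<lambda>_. 0) z' \<le> c"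
      using osc[of n] cbig F0 by force
  qed
  then show ?thesis unfolding paths_def .
qed

lemma sum_union_le:
  fixes g :: "'a \<Rightarrow> real"
  assumes "finite A" "finite B" "\<forall>x\<in>A \<union> B. g x \<ge> 0"
  shows "sum g (A \<union> B) \<le> sum g A + sum g B"
proof -
  have "sum g (A \<union> B) + sum g (A \<inter> B) = sum g A + sum g B" using assms by (intro sum.union_inter) auto
  moreover have "sum g (A \<inter> B) \<ge> 0" using assms by (intro sum_nonneg) auto
  ultimately show ?thesis by linarith
qed

theorem lemma5:
  fixes N M :: nat
    and R \<phi> :: "nat \<Rightarrow> nat \<Rightarrow> nat \<Rightarrow> real"
    and \<gamma> :: "nat \<Rightarrow> nat \<Rightarrow> real"
    and p0 :: "nat \<times> nat \<times> nat \<Rightarrow> real"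
    and f :: "(nat \<times> nat \<times> nat) \<times> (nat \<times> nat \<times> nat) \<Rightarrow> real"
    and m0 :: nat and lam \<epsilon> :: real and n :: nat
  assumes "N \<ge> 1" and "M \<ge> 1"
    and R_nonneg: "\<forall>i\<in>Xs N. \<forall>j\<in>As M. \<forall>i'\<in>Xs N. R i j i' \<ge> 0"
    and R_sum: "\<forall>i\<in>Xs N. \<forall>j\<in>As M. (\<Sum>i'\<in>Xs N. R i j i') = 1"
    and \<gamma>_nonneg: "\<forall>l\<in>Xs N. \<forall>j\<in>As M. \<gamma> l j \<ge> 0"
    and \<gamma>_sum: "\<forall>l\<in>Xs N. (\<Sum>j\<in>As M. \<gamma> l j) = 1"
    and \<phi>_nonneg: "\<forall>i\<in>Xs N. \<forall>i'\<in>Xs N. \<forall>l\<in>Xs N. \<phi> i i' l \<ge> 0"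
    and \<phi>_sum: "\<forall>i\<in>Xs N. \<forall>i'\<in>Xs N. (\<Sum>l\<in>Xs N. \<phi> i i' l) = 1"
    and p0_nonneg: "\<forall>z\<in>Zs N M. p0 z \<ge> 0"
    and p0_sum: "(\<Sum>z\<in>Zs N M. p0 z) = 1"
    and doeb: "doeblin (Xs N \<times> As M) (kernelXA N R \<gamma> \<phi>) m0 lam"
    and eps: "\<epsilon> > 0"
  defines "K \<equiv> kernelZ R \<gamma> \<phi>"
    and "\<mu> \<equiv> 2 * (real m0 + 2) * fnorm (Omega N M R \<gamma> \<phi>) f /
             (lam * Rmin N M R * (gmin N M \<gamma>)\<^sup>2 * (phimin N \<phi>)\<^sup>2)"
    and "ES \<equiv> (\<Sum>p\<in>paths N M n. path_prob p0 (kernelZ R \<gamma> \<phi>) n p * Ssum f n p)"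
  assumes n_large: "real n > \<mu> / \<epsilon>"
  shows "(\<Sum>p\<in>{p\<in>paths N M n. \<bar>Ssum f n p - ES\<bar> \<ge> real n * \<epsilon>}. path_prob p0 K n p)
           \<le> 2 * exp (- 2 * (real n * \<epsilon> - \<mu>)\<^sup>2 / (real n * \<mu>\<^sup>2))"

proof -
  note basic = model_basic[OF R_nonneg R_sum \<gamma>_nonneg \<gamma>_sum \<phi>_nonneg \<phi>_sum]
  have N1: "N \<ge> 1" and M1: "M \<ge> 1" by fact+
  have oneX: "1 \<in> Xs N" using N1 by (simp add: Xs_def)
  have oneA: "1 \<in> As M" using M1 by (simp add: As_def)
  have lam0: "lam > 0" using doeb unfolding doeblin_def by simp
  have lam1: "lam \<le> 1"
    using doeblin_lam_le1(1)[OF _ _ basic(3) doeb] fin_sets oneX oneA by blast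
  define \<Omega> where "\<Omega> = Omega N M R \<gamma> \<phi>"
  define F where "F = fnorm \<Omega> f"
  have finO: "finite \<Omega>"
  proof -
    have "\<Omega> \<subseteq> Zs N M \<times> Zs N M" unfolding \<Omega>_def Omega_def by auto
    then show ?thesis using fin_sets(3) finite_subset by blast
  qed
  have z1: "(1, 1, 1) \<in> Zs N M" using oneX oneA by (simp add: Zs_def)
  have "\<exists>z'\<in>Zs N M. kernelZ R \<gamma> \<phi> (1, 1, 1) z' > 0"
  proof (rule ccontr)
    assume "\<not> ?thesis"
    then have "\<forall>z'\<in>Zs N M. kernelZ R \<gamma> \<phi> (1, 1, 1) z' = 0" using basic(1) z1 by force
    then have "sum (kernelZ R \<gamma> \<phi> (1, 1, 1)) (Zs N M) = 0" by simp
    then show False using basic(4) z1 by simp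
  qed
  then obtain z' where z': "z' \<in> Zs N M" "kernelZ R \<gamma> \<phi> (1, 1, 1) z' > 0" by blast
  have inO: "((1, 1, 1), z') \<in> \<Omega>" unfolding \<Omega>_def Omega_def using z1 z' by simp
  have Fge: "\<bar>f w\<bar> \<le> F" if "w \<in> \<Omega>" for w
    unfolding F_def fnorm_def using finO that by (intro Max_ge) auto
  have F0: "F \<ge> 0" using Fge[OF inO] by simp
  have Fb: "\<forall>z\<in>Zs N M. \<forall>z'\<in>Zs N M. kernelZ R \<gamma> \<phi> z z' > 0 \<longrightarrow> \<bar>f (z, z')\<bar> \<le> F"
    using Fge unfolding \<Omega>_def Omega_def by simp
  have Fb': "\<forall>z\<in>Zs N M. \<forall>z'\<in>Zs N M. kernelZ R \<gamma> \<phi> z z' > 0 \<longrightarrow> \<bar>(\<lambda>w. - f w) (z, z')\<bar> \<le> F"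
    using Fb by simp
  have Rb: "0 < Rmin N M R" "Rmin N M R \<le> 1"
  proof -
    have fin: "finite {R i j i' | i j i'. i \<in> Xs N \<and> j \<in> As M \<and> i' \<in> Xs N}"
    proof (rule finite_subset)
      show "{R i j i' | i j i'. i \<in> Xs N \<and> j \<in> As M \<and> i' \<in> Xs N} \<subseteq> (\<lambda>(i, j, i'). R i j i') ` (Xs N \<times> As M \<times> Xs N)"
      proof
        fix x assume "x \<in> {R i j i' | i j i'. i \<in> Xs N \<and> j \<in> As M \<and> i' \<in> Xs N}"
        then obtain i j i' where x: "x = R i j i'" "i \<in> Xs N" "j \<in> As M" "i' \<in> Xs N" by blast
        then show "x \<in> (\<lambda>(i, j, i'). R i j i') ` (Xs N \<times> As M \<times> Xs N)"
          by (intro image_eqI[of _ _ "(i, j, i')"]) auto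
      qed
    qed (use fin_sets in simp)
    have b: "\<forall>x\<in>{R i j i' | i j i'. i \<in> Xs N \<and> j \<in> As M \<and> i' \<in> Xs N}. 0 \<le> x \<and> x \<le> 1"
    proof
      fix x assume "x \<in> {R i j i' | i j i'. i \<in> Xs N \<and> j \<in> As M \<and> i' \<in> Xs N}"
      then obtain i j i' where x: "x = R i j i'" "i \<in> Xs N" "j \<in> As M" "i' \<in> Xs N" by blast
      have "R i j i' \<le> 1" using le1_of_sum1[where A="Xs N" and g="R i j" and x=i'] R_nonneg R_sum x fin_sets by simp
      then show "0 \<le> x \<and> x \<le> 1" using R_nonneg x by simp
    qed
    obtain i' where "i' \<in> Xs N" "R 1 1 i' \<noteq> 0" using nonzero_of_sum1[of "R 1 1" "Xs N"] R_sum oneX oneA by auto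
    then have ex: "\<exists>x\<in>{R i j i' | i j i'. i \<in> Xs N \<and> j \<in> As M \<and> i' \<in> Xs N}. x \<noteq> 0"
      using oneX oneA by blast
    show "0 < Rmin N M R" "Rmin N M R \<le> 1" unfolding Rmin_def using min_nonzero_bounds[OF fin b ex] by auto
  qed
  have gb: "0 < gmin N M \<gamma>" "gmin N M \<gamma> \<le> 1"
  proof -
    have fin: "finite {\<gamma> l j | l j. l \<in> Xs N \<and> j \<in> As M}"
    proof (rule finite_subset)
      show "{\<gamma> l j | l j. l \<in> Xs N \<and> j \<in> As M} \<subseteq> (\<lambda>(l, j). \<gamma> l j) ` (Xs N \<times> As M)"
      proof
        fix x assume "x \<in> {\<gamma> l j | l j. l \<in> Xs N \<and> j \<in> As M}"
        then obtain l j where x: "x = \<gamma> l j" "l \<in> Xs N" "j \<in> As M" by blast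
        then show "x \<in> (\<lambda>(l, j). \<gamma> l j) ` (Xs N \<times> As M)"
          by (intro image_eqI[of _ _ "(l, j)"]) auto
      qed
    qed (use fin_sets in simp)
    have b: "\<forall>x\<in>{\<gamma> l j | l j. l \<in> Xs N \<and> j \<in> As M}. 0 \<le> x \<and> x \<le> 1"
    proof
      fix x assume "x \<in> {\<gamma> l j | l j. l \<in> Xs N \<and> j \<in> As M}"
      then obtain l j where x: "x = \<gamma> l j" "l \<in> Xs N" "j \<in> As M" by blast
      have "\<gamma> l j \<le> 1" using le1_of_sum1[where A="As M" and g="\<gamma> l" and x=j] \<gamma>_nonneg \<gamma>_sum x fin_sets by simp
      then show "0 \<le> x \<and> x \<le> 1" using \<gamma>_nonneg x by simp
    qed
    obtain j where "j \<in> As M" "\<gamma> 1 j \<noteq> 0" using nonzero_of_sum1[of "\<gamma> 1" "As M"] \<gamma>_sum oneX by auto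
    then have ex: "\<exists>x\<in>{\<gamma> l j | l j. l \<in> Xs N \<and> j \<in> As M}. x \<noteq> 0" using oneX by blast
    show "0 < gmin N M \<gamma>" "gmin N M \<gamma> \<le> 1" unfolding gmin_def using min_nonzero_bounds[OF fin b ex] by auto
  qed
  have pb: "0 < phimin N \<phi>" "phimin N \<phi> \<le> 1"
  proof -
    have fin: "finite {\<phi> i i' l | i i' l. i \<in> Xs N \<and> i' \<in> Xs N \<and> l \<in> Xs N}"
    proof (rule finite_subset)
      show "{\<phi> i i' l | i i' l. i \<in> Xs N \<and> i' \<in> Xs N \<and> l \<in> Xs N} \<subseteq> (\<lambda>(i, i', l). \<phi> i i' l) ` (Xs N \<times> Xs N \<times> Xs N)"
      proof
        fix x assume "x \<in> {\<phi> i i' l | i i' l. i \<in> Xs N \<and> i' \<in> Xs N \<and> l \<in> Xs N}"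
        then obtain i i' l where x: "x = \<phi> i i' l" "i \<in> Xs N" "i' \<in> Xs N" "l \<in> Xs N" by blast
        then show "x \<in> (\<lambda>(i, i', l). \<phi> i i' l) ` (Xs N \<times> Xs N \<times> Xs N)"
          by (intro image_eqI[of _ _ "(i, i', l)"]) auto
      qed
    qed (use fin_sets in simp)
    have b: "\<forall>x\<in>{\<phi> i i' l | i i' l. i \<in> Xs N \<and> i' \<in> Xs N \<and> l \<in> Xs N}. 0 \<le> x \<and> x \<le> 1"
    proof
      fix x assume "x \<in> {\<phi> i i' l | i i' l. i \<in> Xs N \<and> i' \<in> Xs N \<and> l \<in> Xs N}"
      then obtain i i' l where x: "x = \<phi> i i' l" "i \<in> Xs N" "i' \<in> Xs N" "l \<in> Xs N" by blast
      have "\<phi> i i' l \<le> 1" using le1_of_sum1[where A="Xs N" and g="\<phi> i i'" and x=l] \<phi>_nonneg \<phi>_sum x fin_sets by simp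
      then show "0 \<le> x \<and> x \<le> 1" using \<phi>_nonneg x by simp
    qed
    obtain l where "l \<in> Xs N" "\<phi> 1 1 l \<noteq> 0" using nonzero_of_sum1[of "\<phi> 1 1" "Xs N"] \<phi>_sum oneX by auto
    then have ex: "\<exists>x\<in>{\<phi> i i' l | i i' l. i \<in> Xs N \<and> i' \<in> Xs N \<and> l \<in> Xs N}. x \<noteq> 0" using oneX by blast
    show "0 < phimin N \<phi>" "phimin N \<phi> \<le> 1" unfolding phimin_def using min_nonzero_bounds[OF fin b ex] by auto
  qed
  define lam1 where "lam1 = lam * Rmin N M R * (gmin N M \<gamma>)\<^sup>2 * (phimin N \<phi>)\<^sup>2"
  have l1p: "lam1 > 0" unfolding lam1_def using lam0 Rb gb pb by simp
  have l1le: "lam1 \<le> lam"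
  proof -
    have "Rmin N M R * (gmin N M \<gamma>)\<^sup>2 * (phimin N \<phi>)\<^sup>2 \<le> 1 * 1 * 1"
      using Rb gb pb by (intro mult_mono power_le_one) auto
    then have "lam * (Rmin N M R * (gmin N M \<gamma>)\<^sup>2 * (phimin N \<phi>)\<^sup>2) \<le> lam * 1"
      using lam0 by (intro mult_left_mono) auto
    then show ?thesis unfolding lam1_def by (simp add: mult.assoc)
  qed
  have mu_eq: "\<mu> = 2 * (real m0 + 2) * F / lam1" unfolding \<mu>_def F_def \<Omega>_def lam1_def by simp
  have mubig: "\<mu> \<ge> 4 * F + 2 * F * m0 / lam"
  proof -
    have "2 * (real m0 + 2) * F / lam \<le> 2 * (real m0 + 2) * F / lam1"
      using l1p l1le F0 by (intro divide_left_mono mult_nonneg_nonneg) auto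
    moreover have "4 * F + 2 * F * m0 / lam \<le> 2 * (real m0 + 2) * F / lam"
    proof -
      have "4 * F \<le> 4 * F / lam" using F0 lam0 lam1 by (simp add: le_divide_eq mult_left_le)
      then show ?thesis by (simp add: algebra_simps add_divide_distrib)
    qed
    ultimately show ?thesis using mu_eq by linarith
  qed
  have nl: "real n * \<epsilon> > \<mu>" using n_large eps by (simp add: pos_divide_less_eq)
  define P where "P = paths N M n"
  define prob where "prob = path_prob p0 K n"
  have finP: "finite P" unfolding P_def paths_def using fin_sets by (simp add: finite_PiE)
  have prob0: "\<forall>p\<in>P. prob p \<ge> 0"
  proof
    fix p assume "p \<in> P"
    have pt: "p t \<in> Zs N M" if "t \<le> n" for t using \<open>p \<in> P\<close> that unfolding P_def paths_def by (auto simp: PiE_iff)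
    have "p0 (p 0) \<ge> 0" using p0_nonneg pt[of 0] by simp
    moreover have "(\<Prod>t<n. K (p t) (p (Suc t))) \<ge> 0"
    proof (rule prod_nonneg)
      fix t assume "t \<in> {..<n}"
      then show "K (p t) (p (Suc t)) \<ge> 0" using basic(1) pt[of t] pt[of "Suc t"] unfolding K_def by simp
    qed
    ultimately show "prob p \<ge> 0" unfolding prob_def path_prob_def by simp
  qed
  have T1: "(\<Sum>p\<in>{p\<in>P. Ssum f n p - ES \<ge> real n * \<epsilon>}. prob p) \<le> exp (- 2 * (real n * \<epsilon> - \<mu>)\<^sup>2 / (real n * \<mu>\<^sup>2))"
    using model_tail[OF N1 M1 R_nonneg R_sum \<gamma>_nonneg \<gamma>_sum \<phi>_nonneg \<phi>_sum p0_nonneg p0_sum doeb Fb F0 mubig nl]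
    unfolding P_def prob_def K_def ES_def .
  have negS: "Ssum (\<lambda>w. - f w) n p = - Ssum f n p" for p by (simp add: Ssum_def sum_negf)
  have negES: "(\<Sum>p\<in>paths N M n. path_prob p0 (kernelZ R \<gamma> \<phi>) n p * - Ssum f n p) = - ES"
    unfolding ES_def by (simp add: sum_negf)
  have T2: "(\<Sum>p\<in>{p\<in>P. - Ssum f n p + ES \<ge> real n * \<epsilon>}. prob p) \<le> exp (- 2 * (real n * \<epsilon> - \<mu>)\<^sup>2 / (real n * \<mu>\<^sup>2))"
    using model_tail[OF N1 M1 R_nonneg R_sum \<gamma>_nonneg \<gamma>_sum \<phi>_nonneg \<phi>_sum p0_nonneg p0_sum doeb Fb' F0 mubig nl]
    unfolding P_def prob_def K_def negS negES by simp
  have sub: "{p\<in>P. \<bar>Ssum f n p - ES\<bar> \<ge> real n * \<epsilon>} \<subseteq> {p\<in>P. Ssum f n p - ES \<ge> real n * \<epsilon>} \<union> {p\<in>P. - Ssum f n p + ES \<ge> real n * \<epsilon>}"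
  proof
    fix p assume p: "p \<in> {p\<in>P. \<bar>Ssum f n p - ES\<bar> \<ge> real n * \<epsilon>}"
    then have "real n * \<epsilon> \<le> Ssum f n p - ES \<or> real n * \<epsilon> \<le> - Ssum f n p + ES"
      by (cases "Ssum f n p - ES \<ge> 0") auto
    then show "p \<in> {p\<in>P. Ssum f n p - ES \<ge> real n * \<epsilon>} \<union> {p\<in>P. - Ssum f n p + ES \<ge> real n * \<epsilon>}"
      using p by blast
  qed
  have "(\<Sum>p\<in>{p\<in>P. \<bar>Ssum f n p - ES\<bar> \<ge> real n * \<epsilon>}. prob p)
      \<le> (\<Sum>p\<in>{p\<in>P. Ssum f n p - ES \<ge> real n * \<epsilon>} \<union> {p\<in>P. - Ssum f n p + ES \<ge> real n * \<epsilon>}. prob p)"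
    using finP prob0 by (intro sum_mono2[OF _ sub]) auto
  also have "\<dots> \<le> (\<Sum>p\<in>{p\<in>P. Ssum f n p - ES \<ge> real n * \<epsilon>}. prob p) + (\<Sum>p\<in>{p\<in>P. - Ssum f n p + ES \<ge> real n * \<epsilon>}. prob p)"
    using finP prob0 by (intro sum_union_le) auto
  also have "\<dots> \<le> 2 * exp (- 2 * (real n * \<epsilon> - \<mu>)\<^sup>2 / (real n * \<mu>\<^sup>2))" using T1 T2 by simp
  finally show ?thesis unfolding P_def prob_def .
qed

end
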